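(* For every $n\geq1$, the number of $D_{2n}$-orbits of $\mathbf{X}_n$ whose elements have a stabilizer not contained in the rotation subgroup $\langle\sigma\rangle=\{1,\sigma,\dots,\sigma^{n-1}\}$ equals $r(n)$.
   Context: For $n\geq1$ let $V_n=\{v_0,\dots,v_{n-1}\}$, indices modulo $n$. The dihedral group $D_{2n}=\{1,\sigma,\dots,\sigma^{n-1},\tau,\sigma\tau,\dots,\sigma^{n-1}\tau\}$ acts on subsets of $V_n$ elementwise, with $\sigma(v_i)=v_{i+1}$, $\tau(v_i)=v_{n-i}$. Let $\mathbf{X}_n$ be the family of subsets $X\subseteq V_n$ such that (a) there is no $i\in\mathbb{Z}_n$ with $v_i,v_{i+1}\in X$, and (b) for every $i\in\mathbb{Z}_n$ at least one of $v_i,v_{i+1},v_{i+2}$ lies in $X$ (for $n\geq 3$: the maximal independent sets of the cycle graph $C_n$). For $X\in\mathbf{X}_n$, $\mathrm{Stab}(X)=\{g\in D_{2n}:g(X)=X\}$. The Padovan sequence is $q(1)=0$, $q(2)=1$, $q(3)=1$, $q(n)=q(n-2)+q(n-3)$ for $n\geq4$, and $r(2k-1)=q(k)$, $r(2k)=q(k+2)$ for $k\geq1$. *)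

theory Defs
  imports Main
begin

text \<open>Vertices v_0..v_{n-1} are represented by the naturals 0..<n (indices mod n).
  The dihedral group D_{2n} is represented by formal pairs (k,b) with k < n,
  standing for sigma^k (b = False) or sigma^k tau (b = True).\<close>

definition dihedral :: "nat \<Rightarrow> (nat \<times> bool) set" where
  "dihedral n = {(k, b). k < n}"

definition rotations :: "nat \<Rightarrow> (nat \<times> bool) set" where
  "rotations n = {(k, b). k < n \<and> \<not> b}"

text \<open>Action on vertices: sigma^k(v_i) = v_{i+k}; sigma^k tau (v_i) = v_{k-i}.\<close>
definition dact :: "nat \<Rightarrow> nat \<times> bool \<Rightarrow> nat \<Rightarrow> nat" where
  "dact n g i = (case g of (k, b) \<Rightarrow>
     (if b then (k + (n - i mod n)) mod n else (i + k) mod n))"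

definition dact_set :: "nat \<Rightarrow> nat \<times> bool \<Rightarrow> nat set \<Rightarrow> nat set" where
  "dact_set n g X = dact n g ` X"

definition Xfam :: "nat \<Rightarrow> nat set set" where
  "Xfam n = {X. X \<subseteq> {0..<n}
      \<and> (\<forall>i<n. \<not> (i \<in> X \<and> (i + 1) mod n \<in> X))
      \<and> (\<forall>i<n. i \<in> X \<or> (i + 1) mod n \<in> X \<or> (i + 2) mod n \<in> X)}"

definition Stab :: "nat \<Rightarrow> nat set \<Rightarrow> (nat \<times> bool) set" where
  "Stab n X = {g \<in> dihedral n. dact_set n g X = X}"

definition orbit :: "nat \<Rightarrow> nat set \<Rightarrow> nat set set" where
  "orbit n X = {dact_set n g X | g. g \<in> dihedral n}"

fun padovan :: "nat \<Rightarrow> nat" where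
  "padovan 0 = 0"
| "padovan (Suc 0) = 0"
| "padovan (Suc (Suc 0)) = 1"
| "padovan (Suc (Suc (Suc 0))) = 1"
| "padovan (Suc (Suc (Suc (Suc n)))) = padovan (Suc (Suc n)) + padovan (Suc n)"

definition r_seq :: "nat \<Rightarrow> nat" where
  "r_seq n = (if odd n then padovan ((n + 1) div 2) else padovan (n div 2 + 2))"

end

theory Submission
  imports Defs
begin

definition sh :: "int \<Rightarrow> int set \<Rightarrow> int set" where "sh j P = {z. z - j \<in> P}"
definition rf :: "int \<Rightarrow> int set \<Rightarrow> int set" where "rf k P = {z. k - z \<in> P}"
definition per :: "int \<Rightarrow> int set \<Rightarrow> bool" where "per N P = (\<forall>z. z \<in> P \<longleftrightarrow> z + N \<in> P)"
definition MM :: "int \<Rightarrow> int set set" where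
  "MM N = {P. per N P \<and> (\<forall>z. \<not> (z \<in> P \<and> z + 1 \<in> P)) \<and> (\<forall>z. z \<in> P \<or> z + 1 \<in> P \<or> z + 2 \<in> P)}"

lemma sh_sh[simp]: "sh a (sh b P) = sh (a + b) P" by (auto simp: sh_def algebra_simps)
lemma sh_0[simp]: "sh 0 P = P" by (auto simp: sh_def)
lemma rf_rf[simp]: "rf a (rf b P) = sh (a - b) P" by (auto simp: sh_def rf_def algebra_simps)
lemma rf_sh[simp]: "rf a (sh b P) = rf (a - b) P" by (auto simp: sh_def rf_def algebra_simps)
lemma sh_rf[simp]: "sh a (rf b P) = rf (a + b) P" by (auto simp: sh_def rf_def algebra_simps)
lemma mem_sh[simp]: "z \<in> sh j P \<longleftrightarrow> z - j \<in> P" by (simp add: sh_def)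
lemma mem_rf[simp]: "z \<in> rf j P \<longleftrightarrow> j - z \<in> P" by (simp add: rf_def)
lemma sh_eq_iff: "sh a P = Q \<longleftrightarrow> P = sh (- a) Q"
  by (auto simp: sh_def)
lemma rf_eq_iff: "rf a P = Q \<longleftrightarrow> P = rf a Q"
  by (auto simp: rf_def)

lemma per_mult: assumes "per N P" shows "z + m * N \<in> P \<longleftrightarrow> z \<in> P"
proof -
  have A: "z + int k * N \<in> P \<longleftrightarrow> z \<in> P" for k :: nat and z
  proof (induction k arbitrary: z)
    case 0 then show ?case by simp
  next
    case (Suc k)
    have "z + int (Suc k) * N = (z + int k * N) + N" for z by (simp add: algebra_simps)
    then show ?case using Suc assms unfolding per_def by metis
  qed
  show ?thesis
  proof (cases "m \<ge> 0")
    case True then show ?thesis using A[of z "nat m"] by simp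
  next
    case False
    then have "z = (z + m * N) + int (nat (- m)) * N" by simp
    then show ?thesis using A[of "z + m * N" "nat (-m)"] by metis
  qed
qed

lemma per_mod: assumes "per N P" "N > 0" shows "z mod N \<in> P \<longleftrightarrow> z \<in> P"
  using per_mult[OF assms(1), of "z mod N" "z div N"] by (simp add: mod_div_mult_eq algebra_simps)
  
lemma sh_per: assumes "per N P" shows "sh (j + m * N) P = sh j P"
proof (rule set_eqI)
  fix z
  have "z - (j + m*N) = (z - j) + (-m)*N" by (simp add: algebra_simps)
  then show "z \<in> sh (j + m * N) P \<longleftrightarrow> z \<in> sh j P" using per_mult[OF assms, of "z-j" "-m"] by (simp add: algebra_simps)
qed
lemma rf_per: assumes "per N P" shows "rf (j + m * N) P = rf j P"
proof (rule set_eqI)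
  fix z
  have "j + m*N - z = (j - z) + m*N" by (simp add: algebra_simps)
  then show "z \<in> rf (j + m * N) P \<longleftrightarrow> z \<in> rf j P" using per_mult[OF assms, of "j-z" "m"] by (simp add: algebra_simps)
qed

lemma per_sh: assumes "per N P" shows "per N (sh j P)"
  unfolding per_def mem_sh
proof
  fix z
  have "z + N - j = (z - j) + N" by simp
  then show "z - j \<in> P \<longleftrightarrow> z + N - j \<in> P" using assms unfolding per_def by metis
qed
lemma per_rf: assumes "per N P" shows "per N (rf j P)"
  unfolding per_def mem_rf
proof
  fix z
  have "j - z = (j - (z + N)) + N" by simp
  then show "j - z \<in> P \<longleftrightarrow> j - (z + N) \<in> P" using assms unfolding per_def by metis
qed

lemma MM_sh: assumes "P \<in> MM N" shows "sh j P \<in> MM N"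
proof -
  have "\<not> (z - j \<in> P \<and> z + 1 - j \<in> P)" for z
  proof -
    have "z + 1 - j = (z - j) + 1" by simp
    then show ?thesis using assms unfolding MM_def by (metis (no_types, lifting) mem_Collect_eq)
  qed
  moreover have "z - j \<in> P \<or> z + 1 - j \<in> P \<or> z + 2 - j \<in> P" for z
  proof -
    have "z + 1 - j = (z - j) + 1" "z + 2 - j = (z - j) + 2" by simp_all
    then show ?thesis using assms unfolding MM_def by (metis (no_types, lifting) mem_Collect_eq)
  qed
  ultimately show ?thesis using assms per_sh unfolding MM_def by auto
qed

lemma MM_rf: assumes "P \<in> MM N" shows "rf j P \<in> MM N"
proof -
  have "\<not> (j - z \<in> P \<and> j - (z + 1) \<in> P)" for z
  proof -
    have "j - z = (j - (z+1)) + 1" by simp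
    then show ?thesis using assms unfolding MM_def by (metis (no_types, lifting) mem_Collect_eq)
  qed
  moreover have "j - z \<in> P \<or> j - (z + 1) \<in> P \<or> j - (z + 2) \<in> P" for z
  proof -
    have "j - (z+2) \<in> P \<or> j - (z+2) + 1 \<in> P \<or> j - (z+2) + 2 \<in> P" using assms unfolding MM_def by blast
    moreover have "j - (z+2) + 1 = j - (z+1)" "j - (z+2) + 2 = j - z" by simp_all
    ultimately show ?thesis by auto
  qed
  ultimately show ?thesis using assms per_rf unfolding MM_def by auto
qed

lemma MM_gap: assumes "P \<in> MM N" "x \<in> P" shows "x + 1 \<notin> P" "x + 2 \<in> P \<or> x + 3 \<in> P"
proof -
  show "x + 1 \<notin> P" using assms unfolding MM_def by blast
  have "x + 1 \<in> P \<or> x + 1 + 1 \<in> P \<or> x + 1 + 2 \<in> P" using assms unfolding MM_def by blast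
  then show "x + 2 \<in> P \<or> x + 3 \<in> P" using \<open>x + 1 \<notin> P\<close> by (simp add: add.assoc)
qed

lemma gap_win: fixes P :: "int set" and x z :: int assumes gap: "\<forall>x\<in>P. x + 1 \<notin> P \<and> (x + 2 \<in> P \<or> x + 3 \<in> P)"
  shows "x \<in> P \<Longrightarrow> x \<le> z \<Longrightarrow> z \<in> P \<or> z + 1 \<in> P \<or> z + 2 \<in> P"
proof (induction "nat (z - x)" arbitrary: x rule: less_induct)
  case less
  show ?case
  proof (cases "x = z")
    case True then show ?thesis using less by simp
  next
    case False
    then have "x \<noteq> z" .
    obtain y where y: "y \<in> P" "y = x + 2 \<or> y = x + 3" using gap less by blast
    show ?thesis
    proof (cases "y \<le> z")
      case True
      have "nat (z - y) < nat (z - x)" using y less \<open>x \<noteq> z\<close> by auto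
      then show ?thesis using less(1)[OF _ y(1) True] by blast
    next
      case False
      have "y = x + 2 \<or> y = x + 3" "x \<le> z" "x \<noteq> z" using y less \<open>x \<noteq> z\<close> by auto
      then have "y = z + 1 \<or> y = z + 2" using False by linarith
      then show ?thesis using y by auto
    qed
  qed
qed

lemma gap_MM: assumes "N > 0" "per N P" "p \<in> P" and gap: "\<forall>x\<in>P. x + 1 \<notin> P \<and> (x + 2 \<in> P \<or> x + 3 \<in> P)"
  shows "P \<in> MM N"
proof -
  have "z \<in> P \<or> z + 1 \<in> P \<or> z + 2 \<in> P" for z
  proof -
    define d where "d = (p - z) div N"
    define r where "r = (p - z) mod N"
    have e: "p - z = d * N + r" unfolding d_def r_def by simp
    have r: "r < N" unfolding r_def using assms(1) by simp
    define x where "x = p + (- (d + 1)) * N"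
    have x: "x \<in> P" unfolding x_def using per_mult[OF assms(2)] assms(3) by blast
    have "x = p - d * N - N" unfolding x_def by (simp add: algebra_simps)
    then have "x \<le> z" using e r by linarith
    then show ?thesis using gap_win[OF gap x] by blast
  qed
  then show ?thesis using assms gap unfolding MM_def by blast
qed

lemma MM_1: "MM 1 = {}"
proof -
  have False if "P \<in> MM 1" for P
  proof -
    have "0 \<in> P \<or> 0 + 1 \<in> P \<or> 0 + 2 \<in> P" using that unfolding MM_def by blast
    moreover have "per 1 P" using that unfolding MM_def by blast
    then have "z \<in> P \<longleftrightarrow> z + 1 \<in> P" for z unfolding per_def by blast
    ultimately obtain z where "z \<in> P" "z + 1 \<in> P" by (metis add.commute add_0 one_add_one)
    then show False using that unfolding MM_def by blast
  qed
  then show ?thesis by blast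
qed

lemma mult_cases: fixes N m :: int assumes "N \<ge> 1"
  shows "(m \<le> -1 \<and> m * N \<le> - N) \<or> m = 0 \<or> m = 1 \<or> (m \<ge> 2 \<and> m * N \<ge> 2 * N)"
proof -
  have "m \<le> -1 \<or> m = 0 \<or> m = 1 \<or> m \<ge> 2" by linarith
  moreover have "m \<le> -1 \<Longrightarrow> m * N \<le> - N" using assms mult_right_mono[of m "-1" N] by simp
  moreover have "m \<ge> 2 \<Longrightarrow> m * N \<ge> 2 * N" using assms mult_right_mono[of 2 m N] by simp
  ultimately show ?thesis by blast
qed

lemma fold_exists: fixes N k z :: int assumes "N \<ge> 1"
  shows "\<exists>m. (k \<le> 2 * (z - m * N) \<and> 2 * (z - m * N) \<le> k + N) \<or> (k \<le> 2 * (k - z + m * N) \<and> 2 * (k - z + m * N) \<le> k + N)"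
proof -
  define m where "m = (2 * z - k) div (2 * N)"
  define r where "r = (2 * z - k) mod (2 * N)"
  have e0: "2 * z - k = m * (2 * N) + r" unfolding m_def r_def by (rule div_mult_mod_eq[symmetric])
  then have e: "2 * z - k = 2 * (m * N) + r" by (simp add: algebra_simps)
  have r: "0 \<le> r" "r < 2 * N" unfolding r_def using assms by simp_all
  show ?thesis
  proof (cases "r \<le> N")
    case True
    have "k \<le> 2 * (z - m * N) \<and> 2 * (z - m * N) \<le> k + N" using e r True by (simp add: algebra_simps)
    then show ?thesis by blast
  next
    case False
    have "k \<le> 2 * (k - z + (m+1) * N) \<and> 2 * (k - z + (m+1) * N) \<le> k + N" using e r False by (simp add: algebra_simps)
    then show ?thesis by blast
  qed
qed

definition L :: "int \<Rightarrow> int \<Rightarrow> int set set" where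
  "L u v = {B. B \<subseteq> {u..v} \<and> u \<in> B \<and> v \<in> B
     \<and> (\<forall>x\<in>B. x < v \<longrightarrow> x + 1 \<notin> B \<and> (x + 2 \<in> B \<or> x + 3 \<in> B))
     \<and> (\<forall>x\<in>B. u < x \<longrightarrow> x - 1 \<notin> B \<and> (x - 2 \<in> B \<or> x - 3 \<in> B))}"

fun pd :: "nat \<Rightarrow> nat" where
  "pd 0 = 1" | "pd (Suc 0) = 0" | "pd (Suc (Suc 0)) = 1"
| "pd (Suc (Suc (Suc m))) = pd (Suc m) + pd m"

lemma L_finite: "finite (L u v)"
proof -
  have "L u v \<subseteq> Pow {u..v}" unfolding L_def by auto
  then show ?thesis by (rule finite_subset) simp
qed

lemma L_empty: "v < u \<Longrightarrow> L u v = {}" unfolding L_def by auto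

lemma L_uu: "L u u = {{u}}" unfolding L_def by auto

lemma L_u1: "L u (u + 1) = {}"
proof -
  have False if "B \<in> L u (u+1)" for B
    using that unfolding L_def by auto
  then show ?thesis by blast
qed

lemma L_down2: assumes B: "B \<in> L u v" and v: "u + 2 \<le> v" and b: "v - 2 \<in> B"
  shows "B - {v} \<in> L u (v - 2)"
proof -
  have sub: "B \<subseteq> {u..v}" and uv: "u \<in> B" "v \<in> B"
    and fw: "\<And>x. x \<in> B \<Longrightarrow> x < v \<Longrightarrow> x + 1 \<notin> B \<and> (x + 2 \<in> B \<or> x + 3 \<in> B)"
    and bw: "\<And>x. x \<in> B \<Longrightarrow> u < x \<Longrightarrow> x - 1 \<notin> B \<and> (x - 2 \<in> B \<or> x - 3 \<in> B)"
    using B unfolding L_def by blast+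
  have v1: "v - 1 \<notin> B" using bw[OF uv(2)] v by auto
  have "B - {v} \<subseteq> {u..v-2}"
  proof
    fix x assume "x \<in> B - {v}"
    then have "x \<in> B" "x \<noteq> v" by auto
    then show "x \<in> {u..v-2}" using sub v1 by (cases "x = v - 1") auto
  qed
  moreover have "\<forall>x\<in>B - {v}. x < v - 2 \<longrightarrow> x + 1 \<notin> B - {v} \<and> (x + 2 \<in> B - {v} \<or> x + 3 \<in> B - {v})"
  proof (intro ballI impI)
    fix x assume x: "x \<in> B - {v}" "x < v - 2"
    have "x + 1 \<notin> B" "x + 2 \<in> B \<or> x + 3 \<in> B" using fw[of x] x by auto
    moreover have "x + 3 \<noteq> v"
    proof
      assume "x + 3 = v" then have e: "x + 1 = v - 2" by simp
      show False using b \<open>x + 1 \<notin> B\<close> unfolding e[symmetric] by blast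
    qed
    ultimately show "x + 1 \<notin> B - {v} \<and> (x + 2 \<in> B - {v} \<or> x + 3 \<in> B - {v})" using x by auto
  qed
  moreover have "\<forall>x\<in>B - {v}. u < x \<longrightarrow> x - 1 \<notin> B - {v} \<and> (x - 2 \<in> B - {v} \<or> x - 3 \<in> B - {v})"
    using bw sub by auto
  ultimately show ?thesis unfolding L_def using uv v b by auto
qed

lemma L_down3: assumes B: "B \<in> L u v" and v: "u + 2 \<le> v" and b: "v - 2 \<notin> B"
  shows "B - {v} \<in> L u (v - 3)"
proof -
  have sub: "B \<subseteq> {u..v}" and uv: "u \<in> B" "v \<in> B"
    and fw: "\<And>x. x \<in> B \<Longrightarrow> x < v \<Longrightarrow> x + 1 \<notin> B \<and> (x + 2 \<in> B \<or> x + 3 \<in> B)"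
    and bw: "\<And>x. x \<in> B \<Longrightarrow> u < x \<Longrightarrow> x - 1 \<notin> B \<and> (x - 2 \<in> B \<or> x - 3 \<in> B)"
    using B unfolding L_def by blast+
  have v1: "v - 1 \<notin> B" "v - 3 \<in> B" using bw[OF uv(2)] v b by auto
  have "B - {v} \<subseteq> {u..v-3}"
  proof
    fix x assume "x \<in> B - {v}"
    then have "x \<in> B" "x \<noteq> v" by auto
    then show "x \<in> {u..v-3}" using sub v1 b by (cases "x = v - 1 \<or> x = v - 2") auto
  qed
  moreover have "\<forall>x\<in>B - {v}. x < v - 3 \<longrightarrow> x + 1 \<notin> B - {v} \<and> (x + 2 \<in> B - {v} \<or> x + 3 \<in> B - {v})"
  proof (intro ballI impI)
    fix x assume x: "x \<in> B - {v}" "x < v - 3"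
    have "x + 1 \<notin> B" "x + 2 \<in> B \<or> x + 3 \<in> B" using fw[of x] x by auto
    then show "x + 1 \<notin> B - {v} \<and> (x + 2 \<in> B - {v} \<or> x + 3 \<in> B - {v})" using x by auto
  qed
  moreover have "\<forall>x\<in>B - {v}. u < x \<longrightarrow> x - 1 \<notin> B - {v} \<and> (x - 2 \<in> B - {v} \<or> x - 3 \<in> B - {v})"
    using bw sub by auto
  ultimately show ?thesis unfolding L_def using uv v v1 by auto
qed

lemma L_up2: assumes B: "B \<in> L u (v - 2)" shows "insert v B \<in> L u v"
proof -
  have sub: "B \<subseteq> {u..v-2}" and uv: "u \<in> B" "v - 2 \<in> B"
    and fw: "\<And>x. x \<in> B \<Longrightarrow> x < v - 2 \<Longrightarrow> x + 1 \<notin> B \<and> (x + 2 \<in> B \<or> x + 3 \<in> B)"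
    and bw: "\<And>x. x \<in> B \<Longrightarrow> u < x \<Longrightarrow> x - 1 \<notin> B \<and> (x - 2 \<in> B \<or> x - 3 \<in> B)"
    using B unfolding L_def by blast+
  have uv2: "u \<le> v - 2" using sub uv by auto
  have A: "insert v B \<subseteq> {u..v}" using sub uv2 by auto
  have F: "\<forall>x\<in>insert v B. x < v \<longrightarrow> x + 1 \<notin> insert v B \<and> (x + 2 \<in> insert v B \<or> x + 3 \<in> insert v B)"
  proof (intro ballI impI)
    fix x assume x: "x \<in> insert v B" "x < v"
    then have xB: "x \<in> B" by auto
    show "x + 1 \<notin> insert v B \<and> (x + 2 \<in> insert v B \<or> x + 3 \<in> insert v B)"
    proof (cases "x < v - 2")
      case True then show ?thesis using fw[OF xB] sub by auto
    next
      case False then have "x = v - 2" using xB sub by auto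
      then show ?thesis using sub by auto
    qed
  qed
  have Bw: "\<forall>x\<in>insert v B. u < x \<longrightarrow> x - 1 \<notin> insert v B \<and> (x - 2 \<in> insert v B \<or> x - 3 \<in> insert v B)"
  proof (intro ballI impI)
    fix x assume x: "x \<in> insert v B" "u < x"
    show "x - 1 \<notin> insert v B \<and> (x - 2 \<in> insert v B \<or> x - 3 \<in> insert v B)"
    proof (cases "x = v")
      case True then show ?thesis using sub uv by auto
    next
      case False then have "x \<in> B" using x by auto
      then show ?thesis using bw[of x] x sub by auto
    qed
  qed
  show ?thesis unfolding L_def using A F Bw uv by auto
qed

lemma L_up3: assumes B: "B \<in> L u (v - 3)" shows "insert v B \<in> L u v"
proof -
  have sub: "B \<subseteq> {u..v-3}" and uv: "u \<in> B" "v - 3 \<in> B"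
    and fw: "\<And>x. x \<in> B \<Longrightarrow> x < v - 3 \<Longrightarrow> x + 1 \<notin> B \<and> (x + 2 \<in> B \<or> x + 3 \<in> B)"
    and bw: "\<And>x. x \<in> B \<Longrightarrow> u < x \<Longrightarrow> x - 1 \<notin> B \<and> (x - 2 \<in> B \<or> x - 3 \<in> B)"
    using B unfolding L_def by blast+
  have uv2: "u \<le> v - 3" using sub uv by auto
  have A: "insert v B \<subseteq> {u..v}" using sub uv2 by auto
  have F: "\<forall>x\<in>insert v B. x < v \<longrightarrow> x + 1 \<notin> insert v B \<and> (x + 2 \<in> insert v B \<or> x + 3 \<in> insert v B)"
  proof (intro ballI impI)
    fix x assume x: "x \<in> insert v B" "x < v"
    then have xB: "x \<in> B" by auto
    show "x + 1 \<notin> insert v B \<and> (x + 2 \<in> insert v B \<or> x + 3 \<in> insert v B)"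
    proof (cases "x < v - 3")
      case True then show ?thesis using fw[OF xB] sub by auto
    next
      case False then have "x = v - 3" using xB sub by auto
      then show ?thesis using sub by auto
    qed
  qed
  have Bw: "\<forall>x\<in>insert v B. u < x \<longrightarrow> x - 1 \<notin> insert v B \<and> (x - 2 \<in> insert v B \<or> x - 3 \<in> insert v B)"
  proof (intro ballI impI)
    fix x assume x: "x \<in> insert v B" "u < x"
    show "x - 1 \<notin> insert v B \<and> (x - 2 \<in> insert v B \<or> x - 3 \<in> insert v B)"
    proof (cases "x = v")
      case True then show ?thesis using sub uv by auto
    next
      case False then have "x \<in> B" using x by auto
      then show ?thesis using bw[of x] x sub by auto
    qed
  qed
  show ?thesis unfolding L_def using A F Bw uv by auto
qed

lemma L_sub: "B \<in> L u v \<Longrightarrow> B \<subseteq> {u..v}" unfolding L_def by blast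
lemma L_mem: "B \<in> L u v \<Longrightarrow> v \<in> B" unfolding L_def by blast

lemma L_card_rec: assumes v: "u + 2 \<le> v"
  shows "card (L u v) = card (L u (v - 2)) + card (L u (v - 3))"
proof -
  have s1: "L u v \<subseteq> insert v ` L u (v - 2) \<union> insert v ` L u (v - 3)"
  proof
    fix B assume B: "B \<in> L u v"
    have e: "B = insert v (B - {v})" using L_mem[OF B] by blast
    show "B \<in> insert v ` L u (v - 2) \<union> insert v ` L u (v - 3)"
    proof (cases "v - 2 \<in> B")
      case True
      then have "B \<in> insert v ` L u (v - 2)" using e L_down2[OF B v True] by (intro image_eqI)
      then show ?thesis by (rule UnI1)
    next
      case False
      then have "B \<in> insert v ` L u (v - 3)" using e L_down3[OF B v False] by (intro image_eqI)
      then show ?thesis by (rule UnI2)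
    qed
  qed
  have s2: "insert v ` L u (v - 2) \<union> insert v ` L u (v - 3) \<subseteq> L u v"
    using L_up2 L_up3 by (intro Un_least image_subsetI)
  have eq: "L u v = insert v ` L u (v - 2) \<union> insert v ` L u (v - 3)"
    using s1 s2 by (rule subset_antisym)
  have n2: "v \<notin> B" if "B \<in> L u (v - 2)" for B
  proof
    assume "v \<in> B" then have "v \<in> {u..v-2}" using L_sub[OF that] by blast
    then show False by simp
  qed
  have n3: "v \<notin> B" if "B \<in> L u (v - 3)" for B
  proof
    assume "v \<in> B" then have "v \<in> {u..v-3}" using L_sub[OF that] by blast
    then show False by simp
  qed
  have i2: "inj_on (insert v) (L u (v - 2))"
  proof (rule inj_onI)
    fix x y assume "x \<in> L u (v - 2)" "y \<in> L u (v - 2)" "insert v x = insert v y"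
    then show "x = y" using n2 insert_ident by metis
  qed
  have i3: "inj_on (insert v) (L u (v - 3))"
  proof (rule inj_onI)
    fix x y assume "x \<in> L u (v - 3)" "y \<in> L u (v - 3)" "insert v x = insert v y"
    then show "x = y" using n3 insert_ident by metis
  qed
  have d: "insert v ` L u (v - 2) \<inter> insert v ` L u (v - 3) = {}"
  proof -
    have "v - 2 \<in> insert v B" if "B \<in> L u (v - 2)" for B using L_mem[OF that] by blast
    moreover have "v - 2 \<notin> insert v B" if "B \<in> L u (v - 3)" for B
    proof
      assume "v - 2 \<in> insert v B" then have "v - 2 \<in> B" by simp
      then have "v - 2 \<in> {u..v-3}" using L_sub[OF that] by blast
      then show False by simp
    qed
    ultimately show ?thesis by blast
  qed
  have "card (L u v) = card (insert v ` L u (v - 2)) + card (insert v ` L u (v - 3))"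
    unfolding eq by (rule card_Un_disjoint) (use d L_finite in auto)
  also have "\<dots> = card (L u (v - 2)) + card (L u (v - 3))"
    using card_image[OF i2] card_image[OF i3] by simp
  finally show ?thesis .
qed

lemma card_L: "card (L u v) = (if v < u then 0 else pd (nat (v - u)))"
proof (induction "nat (v - u)" arbitrary: v rule: less_induct)
  case less
  show ?case
  proof (cases "v < u")
    case True then show ?thesis using L_empty by simp
  next
    case False
    then consider "v = u" | "v = u + 1" | "u + 2 \<le> v" by linarith
    then show ?thesis
    proof cases
      case 1 then show ?thesis using L_uu by simp
    next
      case 2 then show ?thesis using L_u1 by simp
    next
      case 3
      have a: "card (L u (v - 2)) = pd (nat (v - u - 2))"
        using less[of "v - 2"] 3 by (simp add: algebra_simps)
      have b: "card (L u (v - 3)) = (if v - 3 < u then 0 else pd (nat (v - u - 3)))"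
        using less[of "v - 3"] 3 by (simp add: algebra_simps)
      show ?thesis
      proof (cases "v = u + 2")
        case True
        then show ?thesis using L_card_rec[OF 3] a b by (simp add: numeral_eq_Suc)
      next
        case False
        define m where "m = nat (v - u) - 3"
        have m: "nat (v - u) = Suc (Suc (Suc m))" using 3 False unfolding m_def by arith
        have "nat (v - u - 2) = Suc m" "nat (v - u - 3) = m" using m by auto
        then show ?thesis using L_card_rec[OF 3] a b 3 False m by simp
      qed
    qed
  qed
qed

definition Fk :: "int \<Rightarrow> int \<Rightarrow> int \<Rightarrow> int \<Rightarrow> int set set" where
  "Fk N k u v = {P \<in> MM N. rf k P = P \<and> u \<in> P \<and> v \<in> P
     \<and> (\<forall>z. k \<le> 2 * z \<longrightarrow> z < u \<longrightarrow> z \<notin> P) \<and> (\<forall>z. v < z \<longrightarrow> 2 * z \<le> k + N \<longrightarrow> z \<notin> P)}"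

definition Psi :: "int \<Rightarrow> int \<Rightarrow> int set \<Rightarrow> int set" where
  "Psi N k B = {z. \<exists>b\<in>B. \<exists>m. z = b + m * N \<or> z = k - b + m * N}"

lemma mc: fixes N m :: int assumes "N \<ge> 1"
  shows "(m \<le> -1 \<and> m * N \<le> - N) \<or> (m = 0 \<and> m * N = 0) \<or> (m = 1 \<and> m * N = N) \<or> (m \<ge> 2 \<and> m * N \<ge> 2 * N)"
  using mult_cases[OF assms, of m] by auto

lemma Psi_per: "z \<in> Psi N k B \<longleftrightarrow> z + m * N \<in> Psi N k B"
proof
  assume "z \<in> Psi N k B"
  then obtain b m' where "b \<in> B" "z = b + m' * N \<or> z = k - b + m' * N" unfolding Psi_def by blast
  then have "z + m * N = b + (m' + m) * N \<or> z + m * N = k - b + (m' + m) * N" by (auto simp: algebra_simps)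
  then show "z + m * N \<in> Psi N k B" unfolding Psi_def using \<open>b \<in> B\<close> by blast
next
  assume "z + m * N \<in> Psi N k B"
  then obtain b m' where "b \<in> B" "z + m * N = b + m' * N \<or> z + m * N = k - b + m' * N" unfolding Psi_def by blast
  then have "z = b + (m' - m) * N \<or> z = k - b + (m' - m) * N" by (auto simp: algebra_simps)
  then show "z \<in> Psi N k B" unfolding Psi_def using \<open>b \<in> B\<close> by blast
qed

lemma Psi_rf: "z \<in> Psi N k B \<longleftrightarrow> k - z \<in> Psi N k B"
proof
  assume "z \<in> Psi N k B"
  then obtain b m' where "b \<in> B" "z = b + m' * N \<or> z = k - b + m' * N" unfolding Psi_def by blast
  then have "k - z = k - b + (- m') * N \<or> k - z = b + (- m') * N" by (auto simp: algebra_simps)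
  then show "k - z \<in> Psi N k B" unfolding Psi_def using \<open>b \<in> B\<close> by blast
next
  assume "k - z \<in> Psi N k B"
  then obtain b m' where "b \<in> B" "k - z = b + m' * N \<or> k - z = k - b + m' * N" unfolding Psi_def by blast
  then have "z = k - b + (- m') * N \<or> z = b + (- m') * N" by (auto simp: algebra_simps)
  then show "z \<in> Psi N k B" unfolding Psi_def using \<open>b \<in> B\<close> by blast
qed

lemma Psi_base: "b \<in> B \<Longrightarrow> b \<in> Psi N k B"
  unfolding Psi_def by (rule CollectI, rule bexI[of _ b]) (auto intro: exI[of _ 0])

lemma Psi_base2: "b \<in> B \<Longrightarrow> k - b \<in> Psi N k B"
  using Psi_base Psi_rf by (metis diff_diff_cancel)

lemma Psi_N: "b \<in> B \<Longrightarrow> b + N \<in> Psi N k B"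
  using Psi_base Psi_per[of b N k B 1] by simp

lemma Psi_N2: "b \<in> B \<Longrightarrow> k + N - b \<in> Psi N k B"
  using Psi_base2 Psi_per[of "k - b" N k B 1] by (simp add: algebra_simps)

lemma notin_Psi: assumes "B \<subseteq> {u..v}"
  "\<And>b m. b \<in> B \<Longrightarrow> u \<le> b \<Longrightarrow> b \<le> v \<Longrightarrow> z = b + m * N \<or> z = k - b + m * N \<Longrightarrow> False"
  shows "z \<notin> Psi N k B"
proof
  assume "z \<in> Psi N k B"
  then obtain b m where "b \<in> B" "z = b + m * N \<or> z = k - b + m * N" unfolding Psi_def by blast
  then show False using assms(2)[of b m] assms(1) by auto
qed

lemma L_fw: "B \<in> L u v \<Longrightarrow> x \<in> B \<Longrightarrow> x < v \<Longrightarrow> x + 1 \<notin> B \<and> (x + 2 \<in> B \<or> x + 3 \<in> B)"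
  unfolding L_def by blast
lemma L_bw: "B \<in> L u v \<Longrightarrow> x \<in> B \<Longrightarrow> u < x \<Longrightarrow> x - 1 \<notin> B \<and> (x - 2 \<in> B \<or> x - 3 \<in> B)"
  unfolding L_def by blast
lemma L_u: "B \<in> L u v \<Longrightarrow> u \<in> B"
  unfolding L_def by blast

context
  fixes N k u v :: int
  assumes N2: "N \<ge> 2"
    and d1: "2*u - k = 0 \<or> 2*u - k = 2 \<or> 2*u - k = 3"
    and d2: "k + N - 2*v = 0 \<or> k + N - 2*v = 2 \<or> k + N - 2*v = 3"
begin

lemma N1: "N \<ge> 1" using N2 by simp

lemma D4: assumes B: "B \<subseteq> {u..v}" and z: "u \<le> z" "z \<le> v" and zP: "z \<in> Psi N k B"
  shows "z \<in> B"
proof -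
  obtain b m where b: "b \<in> B" and e: "z = b + m * N \<or> z = k - b + m * N" using zP unfolding Psi_def by blast
  have bb: "u \<le> b" "b \<le> v" using b B by auto
  have "z = b" using mc[OF N1, of m] e bb z d1 d2 N2 by (elim disjE conjE; linarith)
  then show ?thesis using b by simp
qed

lemma KB: assumes B: "B \<in> L u v" and b: "b \<in> B"
  shows "b - 1 \<notin> Psi N k B \<and> (b - 2 \<in> Psi N k B \<or> b - 3 \<in> Psi N k B)"
proof -
  have sub: "B \<subseteq> {u..v}" using B by (rule L_sub)
  have bu: "u \<le> b" "b \<le> v" using b sub by auto
  have uB: "u \<in> B" using B by (rule L_u)
  have uv: "u \<le> v" using uB sub by auto
  show ?thesis
  proof (cases "u < b")
    case True
    have "b - 1 \<notin> B" "b - 2 \<in> B \<or> b - 3 \<in> B" using L_bw[OF B b True] by auto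
    moreover have "b - 1 \<notin> Psi N k B" using D4[OF sub, of "b - 1"] True bu \<open>b - 1 \<notin> B\<close> by auto
    ultimately show ?thesis using Psi_base by blast
  next
    case False
    then have bu': "b = u" using bu by simp
    consider "2*u - k = 0" | "2*u - k = 2" | "2*u - k = 3" using d1 by blast
    then show ?thesis
    proof cases
      case 1
      have A: "u + 1 \<notin> Psi N k B"
      proof (cases "u < v")
        case True
        have "u + 1 \<notin> B" using L_fw[OF B uB True] by simp
        then show ?thesis using D4[OF sub, of "u + 1"] True by auto
      next
        case False
        then have "v = u" using uv by simp
        show ?thesis
        proof (rule notin_Psi[OF sub])
          fix b' m assume "b' \<in> B" "u \<le> b'" "b' \<le> v" "u + 1 = b' + m * N \<or> u + 1 = k - b' + m * N"
          then show False using mc[OF N1, of m] \<open>v = u\<close> 1 N2 by (elim disjE conjE; linarith)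
        qed
      qed
      have "k - (u - 1) = u + 1" using 1 by simp
      then have A': "u - 1 \<notin> Psi N k B" using A Psi_rf[of "u - 1" N k B] by simp
      have "u - 2 \<in> Psi N k B \<or> u - 3 \<in> Psi N k B"
      proof (cases "u < v")
        case True
        have "u + 2 \<in> B \<or> u + 3 \<in> B" using L_fw[OF B uB True] by simp
        moreover have "k - (u + 2) = u - 2" "k - (u + 3) = u - 3" using 1 by simp_all
        ultimately show ?thesis using Psi_base2 by metis
      next
        case False
        then have "v = u" using uv by simp
        then have "N = 2 \<or> N = 3" using 1 d2 N2 by linarith
        moreover have "u + (-1) * N \<in> Psi N k B" using Psi_base[OF uB] Psi_per[of u N k B "-1"] by simp
        ultimately show ?thesis by auto
      qed
      then show ?thesis using A' bu' by simp
    next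
      case 2
      have "u - 1 \<notin> Psi N k B"
      proof (rule notin_Psi[OF sub])
        fix b' m assume "b' \<in> B" "u \<le> b'" "b' \<le> v" "u - 1 = b' + m * N \<or> u - 1 = k - b' + m * N"
        then show False using mc[OF N1, of m] 2 d2 N2 by (elim disjE conjE; linarith)
      qed
      moreover have "u - 2 \<in> Psi N k B"
      proof -
        have "k - u = u - 2" using 2 by simp
        then show ?thesis using Psi_base2[OF uB, where N=N and k=k] by simp
      qed
      ultimately show ?thesis using bu' by simp
    next
      case 3
      have "u - 1 \<notin> Psi N k B"
      proof (rule notin_Psi[OF sub])
        fix b' m assume "b' \<in> B" "u \<le> b'" "b' \<le> v" "u - 1 = b' + m * N \<or> u - 1 = k - b' + m * N"
        then show False using mc[OF N1, of m] 3 d2 N2 by (elim disjE conjE; linarith)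
      qed
      moreover have "u - 3 \<in> Psi N k B"
      proof -
        have "k - u = u - 3" using 3 by simp
        then show ?thesis using Psi_base2[OF uB, where N=N and k=k] by simp
      qed
      ultimately show ?thesis using bu' by simp
    qed
  qed
qed

lemma KF: assumes B: "B \<in> L u v" and b: "b \<in> B"
  shows "b + 1 \<notin> Psi N k B \<and> (b + 2 \<in> Psi N k B \<or> b + 3 \<in> Psi N k B)"
proof -
  have sub: "B \<subseteq> {u..v}" using B by (rule L_sub)
  have bu: "u \<le> b" "b \<le> v" using b sub by auto
  have vB: "v \<in> B" using B by (rule L_mem)
  have uv: "u \<le> v" using vB sub by auto
  show ?thesis
  proof (cases "b < v")
    case True
    have "b + 1 \<notin> B" "b + 2 \<in> B \<or> b + 3 \<in> B" using L_fw[OF B b True] by auto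
    moreover have "b + 1 \<notin> Psi N k B" using D4[OF sub, of "b + 1"] True bu \<open>b + 1 \<notin> B\<close> by auto
    ultimately show ?thesis using Psi_base by blast
  next
    case False
    then have bv': "b = v" using bu by simp
    consider "k + N - 2*v = 0" | "k + N - 2*v = 2" | "k + N - 2*v = 3" using d2 by blast
    then show ?thesis
    proof cases
      case 1
      have A: "v - 1 \<notin> Psi N k B"
      proof (cases "u < v")
        case True
        have "v - 1 \<notin> B" using L_bw[OF B vB True] by simp
        then show ?thesis using D4[OF sub, of "v - 1"] True by auto
      next
        case False
        then have "v = u" using uv by simp
        show ?thesis
        proof (rule notin_Psi[OF sub])
          fix b' m assume "b' \<in> B" "u \<le> b'" "b' \<le> v" "v - 1 = b' + m * N \<or> v - 1 = k - b' + m * N"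
          then show False using mc[OF N1, of m] \<open>v = u\<close> 1 N2 by (elim disjE conjE; linarith)
        qed
      qed
      have e: "(k - (v + 1)) + 1 * N = v - 1" using 1 by simp
      have "v + 1 \<notin> Psi N k B"
      proof
        assume "v + 1 \<in> Psi N k B"
        then have "k - (v + 1) \<in> Psi N k B" using Psi_rf by blast
        then have "(k - (v + 1)) + 1 * N \<in> Psi N k B" using Psi_per by blast
        then have "v - 1 \<in> Psi N k B" by (simp only: e)
        then show False using A by blast
      qed
      moreover have "v + 2 \<in> Psi N k B \<or> v + 3 \<in> Psi N k B"
      proof (cases "u < v")
        case True
        have "v - 2 \<in> B \<or> v - 3 \<in> B" using L_bw[OF B vB True] by simp
        moreover have "k + N - (v - 2) = v + 2" "k + N - (v - 3) = v + 3" using 1 by simp_all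
        ultimately show ?thesis using Psi_N2 by metis
      next
        case False
        then have "v = u" using uv by simp
        then have "N = 2 \<or> N = 3" using 1 d1 N2 by linarith
        moreover have "v + N \<in> Psi N k B" using Psi_N[OF vB] by simp
        ultimately show ?thesis by auto
      qed
      ultimately show ?thesis using bv' by simp
    next
      case 2
      have "v + 1 \<notin> Psi N k B"
      proof (rule notin_Psi[OF sub])
        fix b' m assume "b' \<in> B" "u \<le> b'" "b' \<le> v" "v + 1 = b' + m * N \<or> v + 1 = k - b' + m * N"
        then show False using mc[OF N1, of m] 2 d1 N2 by (elim disjE conjE; linarith)
      qed
      moreover have "v + 2 \<in> Psi N k B"
      proof -
        have "k + N - v = v + 2" using 2 by simp
        then show ?thesis using Psi_N2[OF vB, where N=N and k=k] by simp
      qed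
      ultimately show ?thesis using bv' by simp
    next
      case 3
      have "v + 1 \<notin> Psi N k B"
      proof (rule notin_Psi[OF sub])
        fix b' m assume "b' \<in> B" "u \<le> b'" "b' \<le> v" "v + 1 = b' + m * N \<or> v + 1 = k - b' + m * N"
        then show False using mc[OF N1, of m] 3 d1 N2 by (elim disjE conjE; linarith)
      qed
      moreover have "v + 3 \<in> Psi N k B"
      proof -
        have "k + N - v = v + 3" using 3 by simp
        then show ?thesis using Psi_N2[OF vB, where N=N and k=k] by simp
      qed
      ultimately show ?thesis using bv' by simp
    qed
  qed
qed


lemma Psi_gap: assumes B: "B \<in> L u v" and x: "x \<in> Psi N k B"
  shows "x + 1 \<notin> Psi N k B \<and> (x + 2 \<in> Psi N k B \<or> x + 3 \<in> Psi N k B)"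
proof -
  obtain b m where b: "b \<in> B" and e: "x = b + m * N \<or> x = k - b + m * N" using x unfolding Psi_def by blast
  from e show ?thesis
  proof
    assume e: "x = b + m * N"
    have "x + j \<in> Psi N k B \<longleftrightarrow> b + j \<in> Psi N k B" for j
      using Psi_per[of "b + j" N k B m] e by (simp add: algebra_simps)
    then show ?thesis using KF[OF B b] by simp
  next
    assume e: "x = k - b + m * N"
    have "x + j \<in> Psi N k B \<longleftrightarrow> b - j \<in> Psi N k B" for j
    proof -
      have eq: "x + j = (k - (b - j)) + m * N" using e by simp
      have "x + j \<in> Psi N k B \<longleftrightarrow> k - (b - j) \<in> Psi N k B"
        unfolding eq by (rule Psi_per[symmetric])
      also have "\<dots> \<longleftrightarrow> b - j \<in> Psi N k B" using Psi_rf[of "b - j" N k B] by simp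
      finally show ?thesis .
    qed
    then show ?thesis using KB[OF B b] by simp
  qed
qed

lemma D5: assumes B: "B \<in> L u v" shows "Psi N k B \<in> Fk N k u v"
proof -
  have uB: "u \<in> B" using B by (rule L_u)
  have vB: "v \<in> B" using B by (rule L_mem)
  have per: "per N (Psi N k B)" unfolding per_def using Psi_per[of _ N k B 1] by simp
  have MMP: "Psi N k B \<in> MM N"
    by (rule gap_MM[OF _ per Psi_base[OF uB]]) (use N2 Psi_gap[OF B] in auto)
  have rfP: "rf k (Psi N k B) = Psi N k B"
    by (rule set_eqI) (simp add: Psi_rf[symmetric])
  have left: "\<forall>z. k \<le> 2 * z \<longrightarrow> z < u \<longrightarrow> z \<notin> Psi N k B"
  proof (intro allI impI)
    fix z assume z: "k \<le> 2 * z" "z < u"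
    then have "z = u - 1" using d1 by linarith
    then show "z \<notin> Psi N k B" using KB[OF B uB] by simp
  qed
  have right: "\<forall>z. v < z \<longrightarrow> 2 * z \<le> k + N \<longrightarrow> z \<notin> Psi N k B"
  proof (intro allI impI)
    fix z assume z: "v < z" "2 * z \<le> k + N"
    then have "z = v + 1" using d2 by linarith
    then show "z \<notin> Psi N k B" using KF[OF B vB] by simp
  qed
  show ?thesis unfolding Fk_def using MMP rfP left right Psi_base[OF uB] Psi_base[OF vB] by blast
qed

lemma D1: assumes P: "P \<in> Fk N k u v" shows "u \<le> v"
proof (rule ccontr)
  assume "\<not> u \<le> v"
  then have vu: "v < u" by simp
  have uP: "u \<in> P" and vP: "v \<in> P" and rfP: "rf k P = P"
    and L: "\<And>z. k \<le> 2 * z \<Longrightarrow> z < u \<Longrightarrow> z \<notin> P"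
    and R: "\<And>z. v < z \<Longrightarrow> 2 * z \<le> k + N \<Longrightarrow> z \<notin> P" using P unfolding Fk_def by blast+
  show False
  proof (cases "2 * u \<le> k + N")
    case True then show False using R[of u] vu uP by blast
  next
    case False
    show False
    proof (cases "k \<le> 2 * v")
      case True then show False using L[of v] vu vP by blast
    next
      case False': False
      have "k - v \<in> P" using vP rfP by (metis mem_rf diff_diff_cancel)
      moreover have "k \<le> 2 * (k - v)" using False False' d1 d2 N2 by presburger
      moreover have "k - v < u" using False False' d1 d2 N2 by presburger
      ultimately show False using L by blast
    qed
  qed
qed

lemma D2: assumes P: "P \<in> Fk N k u v" shows "P \<inter> {u..v} \<in> L u v"
proof -
  have uv: "u \<le> v" using D1[OF P] .
  have MMP: "P \<in> MM N" and uP: "u \<in> P" and vP: "v \<in> P" using P unfolding Fk_def by blast+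
  have adj: "\<And>z. z \<in> P \<Longrightarrow> z + 1 \<notin> P" using MM_gap(1)[OF MMP] by blast
  have win: "\<And>z. z \<in> P \<or> z + 1 \<in> P \<or> z + 2 \<in> P" using MMP unfolding MM_def by blast
  have fw: "x + 1 \<notin> P \<inter> {u..v} \<and> (x + 2 \<in> P \<inter> {u..v} \<or> x + 3 \<in> P \<inter> {u..v})"
    if x: "x \<in> P \<inter> {u..v}" "x < v" for x
  proof -
    have xP: "x \<in> P" "u \<le> x" using x by auto
    have v1: "v + 1 \<notin> P" using adj[OF vP] .
    have "x + 2 \<in> P \<or> x + 3 \<in> P" using MM_gap(2)[OF MMP xP(1)] .
    moreover have "x + 2 \<le> v" if "x + 2 \<in> P"
    proof (rule ccontr)
      assume "\<not> x + 2 \<le> v" then have "x + 2 = v + 1" using x by simp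
      then show False using v1 that by metis
    qed
    moreover have "x + 3 \<le> v" if "x + 3 \<in> P" "x + 2 \<notin> P"
    proof (rule ccontr)
      assume "\<not> x + 3 \<le> v" then have "x + 3 = v + 1 \<or> x + 1 = v" using x by linarith
      then show False using v1 that adj[OF xP(1)] vP by metis
    qed
    ultimately show ?thesis using adj[OF xP(1)] xP by auto
  qed
  have bw: "x - 1 \<notin> P \<inter> {u..v} \<and> (x - 2 \<in> P \<inter> {u..v} \<or> x - 3 \<in> P \<inter> {u..v})"
    if x: "x \<in> P \<inter> {u..v}" "u < x" for x
  proof -
    have xP: "x \<in> P" "x \<le> v" using x by auto
    have x1: "x - 1 \<notin> P" using adj[of "x - 1"] xP by auto
    have u1: "u - 1 \<notin> P" using adj[of "u - 1"] uP by auto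
    have "x - 3 \<in> P \<or> x - 3 + 1 \<in> P \<or> x - 3 + 2 \<in> P" using win .
    then have "x - 3 \<in> P \<or> x - 2 \<in> P" using x1 by (auto simp: algebra_simps)
    moreover have "u \<le> x - 2" if "x - 2 \<in> P"
    proof (rule ccontr)
      assume "\<not> u \<le> x - 2" then have "x - 2 = u - 1" using x by simp
      then show False using u1 that by metis
    qed
    moreover have "u \<le> x - 3" if "x - 3 \<in> P"
    proof (rule ccontr)
      assume "\<not> u \<le> x - 3" then have "x - 3 = u - 1 \<or> x - 1 = u" using x by linarith
      then show False using u1 that x1 uP by metis
    qed
    ultimately show ?thesis using x1 xP by auto
  qed
  show ?thesis unfolding L_def using uv uP vP fw bw by auto
qed

lemma D3: assumes P: "P \<in> Fk N k u v" shows "Psi N k (P \<inter> {u..v}) = P"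
proof -
  have MMP: "P \<in> MM N" and rfP: "rf k P = P"
    and L: "\<And>z. k \<le> 2 * z \<Longrightarrow> z < u \<Longrightarrow> z \<notin> P"
    and R: "\<And>z. v < z \<Longrightarrow> 2 * z \<le> k + N \<Longrightarrow> z \<notin> P" using P unfolding Fk_def by blast+
  have per: "per N P" using MMP unfolding MM_def by blast
  have rfm: "k - z \<in> P \<longleftrightarrow> z \<in> P" for z using rfP by (metis mem_rf)
  show ?thesis
  proof
    show "Psi N k (P \<inter> {u..v}) \<subseteq> P"
    proof
      fix z assume "z \<in> Psi N k (P \<inter> {u..v})"
      then obtain b m where b: "b \<in> P" and e: "z = b + m * N \<or> z = k - b + m * N" unfolding Psi_def by blast
      have kb: "k - b \<in> P" using rfm b by simp
      from e show "z \<in> P"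
      proof
        assume "z = b + m * N" then show ?thesis using per_mult[OF per, of b m] b by simp
      next
        assume "z = k - b + m * N" then show ?thesis using per_mult[OF per, of "k - b" m] kb by simp
      qed
    qed
    show "P \<subseteq> Psi N k (P \<inter> {u..v})"
    proof
      fix z assume z: "z \<in> P"
      obtain m where m: "(k \<le> 2 * (z - m * N) \<and> 2 * (z - m * N) \<le> k + N) \<or> (k \<le> 2 * (k - z + m * N) \<and> 2 * (k - z + m * N) \<le> k + N)"
        using fold_exists[OF N1] by blast
      from m show "z \<in> Psi N k (P \<inter> {u..v})"
      proof
        assume w: "k \<le> 2 * (z - m * N) \<and> 2 * (z - m * N) \<le> k + N"
        have wP: "z - m * N \<in> P" using per_mult[OF per, of "z - m * N" m] z by simp
        have "u \<le> z - m * N" using L[of "z - m * N"] w wP by (meson not_le)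
        moreover have "z - m * N \<le> v" using R[of "z - m * N"] w wP by (meson not_le)
        ultimately have "z - m * N \<in> P \<inter> {u..v}" using wP by simp
        moreover have "z = (z - m * N) + m * N" by simp
        ultimately show ?thesis unfolding Psi_def by blast
      next
        assume w: "k \<le> 2 * (k - z + m * N) \<and> 2 * (k - z + m * N) \<le> k + N"
        have wP: "k - z + m * N \<in> P" using per_mult[OF per, of "k - z" m] rfm z by simp
        have "u \<le> k - z + m * N" using L[of "k - z + m * N"] w wP by (meson not_le)
        moreover have "k - z + m * N \<le> v" using R[of "k - z + m * N"] w wP by (meson not_le)
        ultimately have "k - z + m * N \<in> P \<inter> {u..v}" using wP by simp
        moreover have "z = k - (k - z + m * N) + m * N" by simp
        ultimately show ?thesis unfolding Psi_def by blast
      qed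
    qed
  qed
qed

lemma D_bij: "bij_betw (\<lambda>P. P \<inter> {u..v}) (Fk N k u v) (L u v)"
proof (rule bij_betw_imageI)
  show "inj_on (\<lambda>P. P \<inter> {u..v}) (Fk N k u v)"
  proof (rule inj_onI)
    fix P Q assume a: "P \<in> Fk N k u v" "Q \<in> Fk N k u v" and e: "P \<inter> {u..v} = Q \<inter> {u..v}"
    have "P = Psi N k (P \<inter> {u..v})" using D3[OF a(1)] by (rule sym)
    also have "\<dots> = Psi N k (Q \<inter> {u..v})" by (simp only: e)
    also have "\<dots> = Q" using D3[OF a(2)] .
    finally show "P = Q" .
  qed
  show "(\<lambda>P. P \<inter> {u..v}) ` Fk N k u v = L u v"
  proof
    show "(\<lambda>P. P \<inter> {u..v}) ` Fk N k u v \<subseteq> L u v" by (rule image_subsetI) (rule D2)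
    show "L u v \<subseteq> (\<lambda>P. P \<inter> {u..v}) ` Fk N k u v"
    proof
      fix B assume B: "B \<in> L u v"
      have sub: "B \<subseteq> {u..v}" by (rule L_sub[OF B])
      have "Psi N k B \<inter> {u..v} = B"
      proof
        show "Psi N k B \<inter> {u..v} \<subseteq> B"
        proof
          fix z assume "z \<in> Psi N k B \<inter> {u..v}"
          then show "z \<in> B" using D4[OF sub, of z] by simp
        qed
        show "B \<subseteq> Psi N k B \<inter> {u..v}"
        proof
          fix z assume "z \<in> B"
          then show "z \<in> Psi N k B \<inter> {u..v}" using Psi_base[of z B N k] sub by blast
        qed
      qed
      then show "B \<in> (\<lambda>P. P \<inter> {u..v}) ` Fk N k u v" using D5[OF B] by (intro image_eqI[of _ _ "Psi N k B"]) simp_all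
    qed
  qed
qed

lemma card_Fk: "card (Fk N k u v) = card (L u v)"
  using bij_betw_same_card[OF D_bij] .

end

definition FF :: "int \<Rightarrow> int \<Rightarrow> int set set" where
  "FF N k = {P \<in> MM N. rf k P = P}"

lemma rf_mem_iff: "rf k P = P \<Longrightarrow> k - z \<in> P \<longleftrightarrow> z \<in> P"
  by (metis mem_rf)

lemma left_even: assumes "P \<in> MM N" "rf (2 * c) P = P"
  shows "(c \<in> P \<and> (\<forall>z. 2 * c \<le> 2 * z \<longrightarrow> z < c \<longrightarrow> z \<notin> P))
       \<or> (c \<notin> P \<and> c + 1 \<in> P \<and> (\<forall>z. 2 * c \<le> 2 * z \<longrightarrow> z < c + 1 \<longrightarrow> z \<notin> P))"
proof -
  have w0: "\<forall>z. z \<in> P \<or> z + 1 \<in> P \<or> z + 2 \<in> P" using assms(1) unfolding MM_def by blast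
  have w: "c - 1 \<in> P \<or> c \<in> P \<or> c + 1 \<in> P" using spec[OF w0, of "c - 1"] by (simp add: algebra_simps)
  have m: "c - 1 \<in> P \<longleftrightarrow> c + 1 \<in> P" using rf_mem_iff[OF assms(2), of "c - 1"] by simp
  have "c \<in> P \<or> c + 1 \<in> P" using w m by auto
  moreover have "\<forall>z. 2 * c \<le> 2 * z \<longrightarrow> z < c \<longrightarrow> z \<notin> P" by auto
  moreover have "c \<notin> P \<Longrightarrow> \<forall>z. 2 * c \<le> 2 * z \<longrightarrow> z < c + 1 \<longrightarrow> z \<notin> P"
  proof (intro allI impI)
    fix z assume "c \<notin> P" "2 * c \<le> 2 * z" "z < c + 1"
    then have "z = c" by simp
    then show "z \<notin> P" using \<open>c \<notin> P\<close> by simp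
  qed
  ultimately show ?thesis by blast
qed

lemma left_odd: assumes "P \<in> MM N" "rf (2 * c + 1) P = P"
  shows "c + 2 \<in> P \<and> (\<forall>z. 2 * c + 1 \<le> 2 * z \<longrightarrow> z < c + 2 \<longrightarrow> z \<notin> P)"
proof -
  have m: "c + 1 \<in> P \<longleftrightarrow> c \<in> P" using rf_mem_iff[OF assms(2), of "c + 1"] by simp
  have a: "\<not> (c \<in> P \<and> c + 1 \<in> P)" using assms(1) unfolding MM_def by blast
  have c1: "c + 1 \<notin> P" "c \<notin> P" using m a by auto
  have w: "c \<in> P \<or> c + 1 \<in> P \<or> c + 2 \<in> P" using assms(1) unfolding MM_def by blast
  have "c + 2 \<in> P" using w c1 by auto
  moreover have "\<forall>z. 2 * c + 1 \<le> 2 * z \<longrightarrow> z < c + 2 \<longrightarrow> z \<notin> P"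
  proof (intro allI impI)
    fix z assume "2 * c + 1 \<le> 2 * z" "z < c + 2"
    then have "z = c + 1" by simp
    then show "z \<notin> P" using c1 by simp
  qed
  ultimately show ?thesis by blast
qed

lemma right_even: assumes "P \<in> MM N" "rf (2 * e) P = P"
  shows "(e \<in> P \<and> (\<forall>z. e < z \<longrightarrow> 2 * z \<le> 2 * e \<longrightarrow> z \<notin> P))
       \<or> (e \<notin> P \<and> e - 1 \<in> P \<and> (\<forall>z. e - 1 < z \<longrightarrow> 2 * z \<le> 2 * e \<longrightarrow> z \<notin> P))"
proof -
  have w0: "\<forall>z. z \<in> P \<or> z + 1 \<in> P \<or> z + 2 \<in> P" using assms(1) unfolding MM_def by blast
  have w: "e - 1 \<in> P \<or> e \<in> P \<or> e + 1 \<in> P" using spec[OF w0, of "e - 1"] by (simp add: algebra_simps)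
  have m: "e - 1 \<in> P \<longleftrightarrow> e + 1 \<in> P" using rf_mem_iff[OF assms(2), of "e - 1"] by simp
  have "e \<in> P \<or> e - 1 \<in> P" using w m by auto
  moreover have "\<forall>z. e < z \<longrightarrow> 2 * z \<le> 2 * e \<longrightarrow> z \<notin> P" by auto
  moreover have "e \<notin> P \<Longrightarrow> \<forall>z. e - 1 < z \<longrightarrow> 2 * z \<le> 2 * e \<longrightarrow> z \<notin> P"
  proof (intro allI impI)
    fix z assume "e \<notin> P" "e - 1 < z" "2 * z \<le> 2 * e"
    then have "z = e" by simp
    then show "z \<notin> P" using \<open>e \<notin> P\<close> by simp
  qed
  ultimately show ?thesis by blast
qed

lemma right_odd: assumes "P \<in> MM N" "rf (2 * e + 1) P = P"
  shows "e - 1 \<in> P \<and> (\<forall>z. e - 1 < z \<longrightarrow> 2 * z \<le> 2 * e + 1 \<longrightarrow> z \<notin> P)"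
proof -
  have m: "e + 1 \<in> P \<longleftrightarrow> e \<in> P" using rf_mem_iff[OF assms(2), of "e + 1"] by simp
  have a: "\<not> (e \<in> P \<and> e + 1 \<in> P)" using assms(1) unfolding MM_def by blast
  have c1: "e + 1 \<notin> P" "e \<notin> P" using m a by auto
  have w0: "\<forall>z. z \<in> P \<or> z + 1 \<in> P \<or> z + 2 \<in> P" using assms(1) unfolding MM_def by blast
  have w: "e - 1 \<in> P \<or> e \<in> P \<or> e + 1 \<in> P" using spec[OF w0, of "e - 1"] by (simp add: algebra_simps)
  have "e - 1 \<in> P" using w c1 by auto
  moreover have "\<forall>z. e - 1 < z \<longrightarrow> 2 * z \<le> 2 * e + 1 \<longrightarrow> z \<notin> P"
  proof (intro allI impI)
    fix z assume "e - 1 < z" "2 * z \<le> 2 * e + 1"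
    then have "z = e" by simp
    then show "z \<notin> P" using c1 by simp
  qed
  ultimately show ?thesis by blast
qed

lemma rf_N: assumes "P \<in> MM N" "rf k P = P" shows "rf (k + N) P = P"
proof -
  have "per N P" using assms(1) unfolding MM_def by blast
  then show ?thesis using rf_per[of N P k 1] assms(2) by simp
qed

lemma Fk_FF: "Fk N k u v \<subseteq> FF N k" unfolding Fk_def FF_def by blast

lemma card_FF0_odd: assumes N: "N = 2 * h + 1" "h \<ge> 1"
  shows "card (FF N 0) = card (L 0 (h - 1)) + card (L 1 (h - 1))"
proof -
  have N2: "N \<ge> 2" using N by simp
  have eq: "FF N 0 = Fk N 0 0 (h - 1) \<union> Fk N 0 1 (h - 1)"
  proof
    show "FF N 0 \<subseteq> Fk N 0 0 (h - 1) \<union> Fk N 0 1 (h - 1)"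
    proof
      fix P assume P: "P \<in> FF N 0"
      have MP: "P \<in> MM N" and r: "rf 0 P = P" using P unfolding FF_def by blast+
      have r0: "rf (2 * 0) P = P" using r by simp
      have r1: "rf (2 * h + 1) P = P" using rf_N[OF MP r] N by simp
      have R: "h - 1 \<in> P \<and> (\<forall>z. h - 1 < z \<longrightarrow> 2 * z \<le> 0 + N \<longrightarrow> z \<notin> P)"
        using right_odd[OF MP r1] N by simp
      show "P \<in> Fk N 0 0 (h - 1) \<union> Fk N 0 1 (h - 1)"
        using left_even[OF MP r0] R MP r unfolding Fk_def by auto
    qed
    show "Fk N 0 0 (h - 1) \<union> Fk N 0 1 (h - 1) \<subseteq> FF N 0" using Fk_FF by blast
  qed
  have disj: "Fk N 0 0 (h - 1) \<inter> Fk N 0 1 (h - 1) = {}" unfolding Fk_def by auto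
  have b0: "bij_betw (\<lambda>P. P \<inter> {0..h-1}) (Fk N 0 0 (h - 1)) (L 0 (h - 1))"
    by (rule D_bij) (use N2 N in auto)
  have b1: "bij_betw (\<lambda>P. P \<inter> {1..h-1}) (Fk N 0 1 (h - 1)) (L 1 (h - 1))"
    by (rule D_bij) (use N2 N in auto)
  have f0: "finite (Fk N 0 0 (h - 1))" using bij_betw_finite[OF b0] L_finite by blast
  have f1: "finite (Fk N 0 1 (h - 1))" using bij_betw_finite[OF b1] L_finite by blast
  show ?thesis unfolding eq
    using card_Un_disjoint[OF f0 f1 disj] bij_betw_same_card[OF b0] bij_betw_same_card[OF b1] by simp
qed

lemma Fk_fin: assumes "N \<ge> 2" "2*u - k = 0 \<or> 2*u - k = 2 \<or> 2*u - k = 3" "k + N - 2*v = 0 \<or> k + N - 2*v = 2 \<or> k + N - 2*v = 3"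
  shows "finite (Fk N k u v)" "card (Fk N k u v) = card (L u v)"
proof -
  have b: "bij_betw (\<lambda>P. P \<inter> {u..v}) (Fk N k u v) (L u v)" by (rule D_bij[OF assms])
  show "finite (Fk N k u v)" using bij_betw_finite[OF b] L_finite by blast
  show "card (Fk N k u v) = card (L u v)" using bij_betw_same_card[OF b] .
qed

lemma card_FF0_even: assumes N: "N = 2 * h" "h \<ge> 1"
  shows "card (FF N 0) = card (L 0 h) + card (L 0 (h - 1)) + card (L 1 h) + card (L 1 (h - 1))"
proof -
  have N2: "N \<ge> 2" using N by simp
  have eq: "FF N 0 = (Fk N 0 0 h \<union> Fk N 0 0 (h - 1)) \<union> (Fk N 0 1 h \<union> Fk N 0 1 (h - 1))"
  proof
    show "FF N 0 \<subseteq> (Fk N 0 0 h \<union> Fk N 0 0 (h - 1)) \<union> (Fk N 0 1 h \<union> Fk N 0 1 (h - 1))"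
    proof
      fix P assume P: "P \<in> FF N 0"
      have MP: "P \<in> MM N" and r: "rf 0 P = P" using P unfolding FF_def by blast+
      have r0: "rf (2 * 0) P = P" using r by simp
      have r1: "rf (2 * h) P = P" using rf_N[OF MP r] N by simp
      have R: "(h \<in> P \<and> (\<forall>z. h < z \<longrightarrow> 2 * z \<le> 0 + N \<longrightarrow> z \<notin> P))
       \<or> (h - 1 \<in> P \<and> (\<forall>z. h - 1 < z \<longrightarrow> 2 * z \<le> 0 + N \<longrightarrow> z \<notin> P))"
        using right_even[OF MP r1] N by auto
      show "P \<in> (Fk N 0 0 h \<union> Fk N 0 0 (h - 1)) \<union> (Fk N 0 1 h \<union> Fk N 0 1 (h - 1))"
        using left_even[OF MP r0] R MP r unfolding Fk_def by auto
    qed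
    show "(Fk N 0 0 h \<union> Fk N 0 0 (h - 1)) \<union> (Fk N 0 1 h \<union> Fk N 0 1 (h - 1)) \<subseteq> FF N 0" using Fk_FF by blast
  qed
  have dA: "Fk N 0 0 h \<inter> Fk N 0 0 (h - 1) = {}" unfolding Fk_def using N by auto
  have dB: "Fk N 0 1 h \<inter> Fk N 0 1 (h - 1) = {}" unfolding Fk_def using N by auto
  have dAB: "(Fk N 0 0 h \<union> Fk N 0 0 (h - 1)) \<inter> (Fk N 0 1 h \<union> Fk N 0 1 (h - 1)) = {}" unfolding Fk_def by auto
  have c00: "finite (Fk N 0 0 h)" "card (Fk N 0 0 h) = card (L 0 h)" by (rule Fk_fin; use N2 N in auto)+
  have c01: "finite (Fk N 0 0 (h-1))" "card (Fk N 0 0 (h-1)) = card (L 0 (h-1))" by (rule Fk_fin; use N2 N in auto)+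
  have c10: "finite (Fk N 0 1 h)" "card (Fk N 0 1 h) = card (L 1 h)" by (rule Fk_fin; use N2 N in auto)+
  have c11: "finite (Fk N 0 1 (h-1))" "card (Fk N 0 1 (h-1)) = card (L 1 (h-1))" by (rule Fk_fin; use N2 N in auto)+
  show ?thesis unfolding eq
    using card_Un_disjoint[OF finite_UnI[OF c00(1) c01(1)] finite_UnI[OF c10(1) c11(1)] dAB]
      card_Un_disjoint[OF c00(1) c01(1) dA] card_Un_disjoint[OF c10(1) c11(1) dB] c00 c01 c10 c11 by simp
qed

lemma card_FF1_even: assumes N: "N = 2 * h" "h \<ge> 1"
  shows "card (FF N 1) = card (L 2 (h - 1))"
proof -
  have N2: "N \<ge> 2" using N by simp
  have eq: "FF N 1 = Fk N 1 2 (h - 1)"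
  proof
    show "FF N 1 \<subseteq> Fk N 1 2 (h - 1)"
    proof
      fix P assume P: "P \<in> FF N 1"
      have MP: "P \<in> MM N" and r: "rf 1 P = P" using P unfolding FF_def by blast+
      have r0: "rf (2 * 0 + 1) P = P" using r by simp
      have r1: "rf (2 * h + 1) P = P" using rf_N[OF MP r] N by (simp add: add.commute)
      have R: "h - 1 \<in> P \<and> (\<forall>z. h - 1 < z \<longrightarrow> 2 * z \<le> 1 + N \<longrightarrow> z \<notin> P)"
        using right_odd[OF MP r1] N by simp
      show "P \<in> Fk N 1 2 (h - 1)"
        using left_odd[OF MP r0] R MP r unfolding Fk_def by auto
    qed
    show "Fk N 1 2 (h - 1) \<subseteq> FF N 1" using Fk_FF by blast
  qed
  show ?thesis unfolding eq by (rule Fk_fin; use N2 N in auto)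
qed

lemma nat_mod_inj: fixes a b :: nat assumes "a < n" "b < n" "(int a + c) mod int n = (int b + c) mod int n"
  shows "a = b"
proof -
  have "int n dvd (int a + c) - (int b + c)" using assms(3) mod_eq_dvd_iff by blast
  then have "int n dvd int a - int b" by simp
  then obtain q where q: "int a - int b = int n * q" by (elim dvdE)
  then have q': "int a - int b = q * int n" by (simp add: mult.commute)
  have n1: "int n \<ge> 1" using assms by simp
  have b1: "int a - int b < int n" "int a - int b > - int n" using assms by auto
  have "q = 0" using mc[OF n1, of q] q' b1 by (elim disjE conjE; linarith)
  then show ?thesis using q by simp
qed

lemma shift_card: fixes Pr :: "int \<Rightarrow> bool" and n :: nat
  assumes n: "n \<ge> 1" and p: "\<And>z. Pr (z + int n) = Pr z"
  shows "card {k. k < n \<and> Pr (int k + c)} = card {k. k < n \<and> Pr (int k)}"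
proof -
  define N where "N = int n"
  have N0: "N > 0" using n unfolding N_def by simp
  have perP: "per N (Collect Pr)" unfolding per_def N_def using p by simp
  have pm: "Pr (z mod N) = Pr z" for z using per_mod[OF perP N0, of z] by simp
  define f where "f k = nat ((int k + c) mod N)" for k
  have "bij_betw f {k. k < n \<and> Pr (int k + c)} {k. k < n \<and> Pr (int k)}"
  proof (rule bij_betw_imageI)
    show "inj_on f {k. k < n \<and> Pr (int k + c)}"
    proof (rule inj_onI)
      fix a b assume a: "a \<in> {k. k < n \<and> Pr (int k + c)}" and b: "b \<in> {k. k < n \<and> Pr (int k + c)}" and e: "f a = f b"
      have "(int a + c) mod N \<ge> 0" "(int b + c) mod N \<ge> 0" using N0 by simp_all
      then have "(int a + c) mod N = (int b + c) mod N" using e unfolding f_def by (simp add: eq_nat_nat_iff)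
      then show "a = b" using nat_mod_inj[of a n b c] a b unfolding N_def by simp
    qed
    show "f ` {k. k < n \<and> Pr (int k + c)} = {k. k < n \<and> Pr (int k)}"
    proof
      show "f ` {k. k < n \<and> Pr (int k + c)} \<subseteq> {k. k < n \<and> Pr (int k)}"
      proof
        fix x assume "x \<in> f ` {k. k < n \<and> Pr (int k + c)}"
        then obtain k where k: "k < n" "Pr (int k + c)" and x: "x = f k" by blast
        have ix: "int x = (int k + c) mod N" unfolding x f_def using N0 by simp
        moreover have "(int k + c) mod N < N" using N0 by simp
        ultimately have "int x < int n" unfolding N_def by simp
        then have "x < n" by simp
        moreover have "Pr (int x)" unfolding ix using pm[of "int k + c"] k by simp
        ultimately show "x \<in> {k. k < n \<and> Pr (int k)}" by simp
      qed
      show "{k. k < n \<and> Pr (int k)} \<subseteq> f ` {k. k < n \<and> Pr (int k + c)}"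
      proof
        fix x assume x: "x \<in> {k. k < n \<and> Pr (int k)}"
        define k where "k = nat ((int x - c) mod N)"
        have k1: "int k = (int x - c) mod N" unfolding k_def using N0 by simp
        have kn: "k < n" using k1 N0 unfolding N_def by (metis Euclidean_Rings.pos_mod_bound of_nat_less_iff)
        have "(int k + c) mod N = int x mod N" unfolding k1 by (simp add: mod_simps)
        also have "\<dots> = int x" using x unfolding N_def by simp
        finally have e: "(int k + c) mod N = int x" .
        have "Pr (int k + c)" using pm[of "int k + c"] e x by simp
        moreover have "f k = x" unfolding f_def e by simp
        ultimately show "x \<in> f ` {k. k < n \<and> Pr (int k + c)}" using kn by blast
      qed
    qed
  qed
  then show ?thesis by (rule bij_betw_same_card)
qed

definition orbE :: "int \<Rightarrow> int set \<Rightarrow> int set set" where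
  "orbE N P = {sh j P | j. 0 \<le> j \<and> j < N} \<union> {rf j P | j. 0 \<le> j \<and> j < N}"

lemma orbE_all: assumes "per N P" "N > 0"
  shows "orbE N P = {sh j P | j. True} \<union> {rf j P | j. True}"
proof
  show "orbE N P \<subseteq> {sh j P | j. True} \<union> {rf j P | j. True}" unfolding orbE_def by blast
  show "{sh j P | j. True} \<union> {rf j P | j. True} \<subseteq> orbE N P"
  proof
    fix Q assume "Q \<in> {sh j P | j. True} \<union> {rf j P | j. True}"
    then obtain j where "Q = sh j P \<or> Q = rf j P" by blast
    moreover have "sh j P = sh (j mod N) P" using sh_per[OF assms(1), of "j mod N" "j div N"]
      by (simp add: mod_div_mult_eq)
    moreover have "rf j P = rf (j mod N) P" using rf_per[OF assms(1), of "j mod N" "j div N"]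
      by (simp add: mod_div_mult_eq)
    moreover have "0 \<le> j mod N" "j mod N < N" using assms(2) by simp_all
    ultimately show "Q \<in> orbE N P" unfolding orbE_def by blast
  qed
qed

lemma orbE_self: "N > 0 \<Longrightarrow> P \<in> orbE N P"
  unfolding orbE_def using sh_0[of P] by (metis (mono_tags, lifting) UnI1 mem_Collect_eq order_refl)

lemma orbE_mem: assumes "Q \<in> orbE N P" shows "\<exists>c. Q = sh c P \<or> Q = rf c P"
  using assms unfolding orbE_def by blast

lemma orbE_MM: assumes "Q \<in> orbE N P" "P \<in> MM N" shows "Q \<in> MM N"
  using orbE_mem[OF assms(1)] MM_sh[OF assms(2)] MM_rf[OF assms(2)] by blast

lemma orbE_eq: assumes Q: "Q \<in> orbE N P" and per: "per N P" and N: "N > 0"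
  shows "orbE N Q = orbE N P"
proof -
  obtain c where c: "Q = sh c P \<or> Q = rf c P" using orbE_mem[OF Q] by blast
  have perQ: "per N Q" using c per_sh[OF per] per_rf[OF per] by blast
  have "{sh j Q | j. True} \<union> {rf j Q | j. True} = {sh j P | j. True} \<union> {rf j P | j. True}"
  proof
    show "{sh j Q | j. True} \<union> {rf j Q | j. True} \<subseteq> {sh j P | j. True} \<union> {rf j P | j. True}"
      using c by auto
    show "{sh j P | j. True} \<union> {rf j P | j. True} \<subseteq> {sh j Q | j. True} \<union> {rf j Q | j. True}"
    proof
      fix R assume "R \<in> {sh j P | j. True} \<union> {rf j P | j. True}"
      then obtain j where j: "R = sh j P \<or> R = rf j P" by blast
      from c show "R \<in> {sh j Q | j. True} \<union> {rf j Q | j. True}"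
      proof
        assume c: "Q = sh c P"
        have "sh (j - c) Q = sh j P" "rf (j + c) Q = rf j P" unfolding c by simp_all
        then show ?thesis using j by blast
      next
        assume c: "Q = rf c P"
        have "rf (j + c) Q = sh j P" "sh (j - c) Q = rf j P" unfolding c by simp_all
        then show ?thesis using j by blast
      qed
    qed
  qed
  then show ?thesis using orbE_all[OF per N] orbE_all[OF perQ N] by simp
qed

lemma orbE_sh: assumes "Q \<in> orbE N P" "rf a P = P" shows "\<exists>c. Q = sh c P"
proof -
  obtain c where c: "Q = sh c P \<or> Q = rf c P" using orbE_mem[OF assms(1)] by blast
  then show ?thesis
  proof
    assume "Q = rf c P"
    then have "Q = rf c (rf a P)" using assms(2) by simp
    then show ?thesis by auto
  qed blast
qed

lemma MM_finite: assumes "N > 0" shows "finite (MM N)"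
proof -
  have "MM N \<subseteq> (\<lambda>X. {z. z mod N \<in> X}) ` Pow {0..<N}"
  proof
    fix P assume P: "P \<in> MM N"
    then have per: "per N P" unfolding MM_def by blast
    have "P = {z. z mod N \<in> P \<inter> {0..<N}}" using per_mod[OF per assms] assms by auto
    then show "P \<in> (\<lambda>X. {z. z mod N \<in> X}) ` Pow {0..<N}" by blast
  qed
  then show ?thesis by (rule finite_subset) simp
qed

lemma orbE_finite: "finite (orbE N P)"
proof -
  have "orbE N P = (\<lambda>j. sh j P) ` {0..<N} \<union> (\<lambda>j. rf j P) ` {0..<N}" unfolding orbE_def by auto
  then show ?thesis by simp
qed

lemma sh_inj: "sh c A = sh c B \<longleftrightarrow> A = B"
  by (metis add.right_inverse sh_0 sh_sh)

lemma PO_card: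
  fixes n :: nat
  assumes n: "n \<ge> 1" and X: "X \<in> MM (int n)" and a: "rf a X = X"
  shows "card {(k, Q). k < n \<and> Q \<in> orbE (int n) X \<and> rf (int k) Q = Q} = n"
proof -
  define N where "N = int n"
  have N0: "N > 0" using n unfolding N_def by simp
  have per: "per N X" using X unfolding MM_def N_def by blast
  define Pr where "Pr d = (sh d X = X)" for d
  have prp: "Pr (z + int n) = Pr z" for z
    unfolding Pr_def using sh_per[OF per, of z 1] unfolding N_def by simp
  define T where "T = {d. d < n \<and> Pr (int d)}"
  define t where "t = card T"
  have t1: "t \<ge> 1"
  proof -
    have "0 \<in> T" unfolding T_def Pr_def using n by simp
    moreover have "finite T" unfolding T_def by simp
    ultimately show ?thesis unfolding t_def by (metis One_nat_def Suc_leI card_gt_0_iff empty_iff)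
  qed
  have e1: "sh d X = rf (d + a) X" for d
  proof -
    have "sh d X = sh d (rf a X)" by (simp only: a)
    then show ?thesis by simp
  qed
  define K where "K j = {k. k < n \<and> rf (int k) (sh (int j) X) = sh (int j) X}" for j :: nat
  have Kc: "card (K j) = t" for j
  proof -
    have "rf (int k) (sh (int j) X) = sh (int j) X \<longleftrightarrow> Pr (int k + (- 2 * int j - a))" for k
    proof -
      have "rf (int k) (sh (int j) X) = sh (int j) X \<longleftrightarrow> sh (- int j) (rf (int k) (sh (int j) X)) = sh (- int j) (sh (int j) X)"
        using sh_inj by blast
      also have "\<dots> \<longleftrightarrow> rf (int k - 2 * int j) X = X" by (simp add: algebra_simps)
      also have "\<dots> \<longleftrightarrow> sh (int k + (- 2 * int j - a)) X = X" using e1[of "int k + (- 2 * int j - a)"]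
        by (simp add: algebra_simps)
      finally show ?thesis unfolding Pr_def .
    qed
    then have "K j = {k. k < n \<and> Pr (int k + (- 2 * int j - a))}" unfolding K_def by simp
    then show ?thesis using shift_card[where Pr=Pr, OF n prp] unfolding t_def T_def by simp
  qed
  define Trip where "Trip = Sigma {..<n} K"
  have cT: "card Trip = n * t" unfolding Trip_def using Kc by (simp add: K_def)
  define PO where "PO = {(k, Q). k < n \<and> Q \<in> orbE (int n) X \<and> rf (int k) Q = Q}"
  define Fib where "Fib p = {j. j < n \<and> sh (int j) X = snd p}" for p :: "nat \<times> int set"
  have finPO: "finite PO"
  proof -
    have "PO \<subseteq> {..<n} \<times> orbE (int n) X" unfolding PO_def by auto
    then show ?thesis by (rule finite_subset) (simp add: orbE_finite)
  qed
  have cF: "card (Fib p) = t" if p: "p \<in> PO" for p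
  proof -
    obtain k Q where p': "p = (k, Q)" "Q \<in> orbE (int n) X" using p unfolding PO_def by blast
    obtain c where c: "Q = sh c X" using orbE_sh[OF p'(2) a] by blast
    have "sh (int j) X = sh c X \<longleftrightarrow> Pr (int j + (- c))" for j
    proof -
      have "sh (int j) X = sh c X \<longleftrightarrow> sh (- c) (sh (int j) X) = sh (- c) (sh c X)" using sh_inj by blast
      then show ?thesis unfolding Pr_def by (simp add: algebra_simps)
    qed
    then have eqF: "Fib p = {j. j < n \<and> Pr (int j + (- c))}" unfolding Fib_def p' c by simp
    show ?thesis unfolding eqF t_def T_def by (rule shift_card[where Pr=Pr, OF n prp])
  qed
  have bij: "bij_betw (\<lambda>(j, k). ((k, sh (int j) X), j)) Trip (Sigma PO Fib)"
  proof (rule bij_betw_imageI)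
    show "inj_on (\<lambda>(j, k). ((k, sh (int j) X), j)) Trip"
    proof (rule inj_onI)
      fix x y assume "(\<lambda>(j, k). ((k, sh (int j) X), j)) x = (\<lambda>(j, k). ((k, sh (int j) X), j)) y"
      then show "x = y" by (cases x, cases y) simp
    qed
    show "(\<lambda>(j, k). ((k, sh (int j) X), j)) ` Trip = Sigma PO Fib"
    proof
      show "(\<lambda>(j, k). ((k, sh (int j) X), j)) ` Trip \<subseteq> Sigma PO Fib"
      proof
        fix x assume "x \<in> (\<lambda>(j, k). ((k, sh (int j) X), j)) ` Trip"
        then obtain j k where jk: "(j, k) \<in> Trip" "x = ((k, sh (int j) X), j)" by auto
        have j: "j < n" and k: "k < n" "rf (int k) (sh (int j) X) = sh (int j) X"
          using jk(1) unfolding Trip_def K_def by auto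
        have "sh (int j) X \<in> orbE (int n) X" unfolding orbE_def using j by auto
        then have "(k, sh (int j) X) \<in> PO" unfolding PO_def using k by simp
        moreover have "j \<in> Fib (k, sh (int j) X)" unfolding Fib_def using j by simp
        ultimately show "x \<in> Sigma PO Fib" unfolding jk(2) by (rule SigmaI)
      qed
      show "Sigma PO Fib \<subseteq> (\<lambda>(j, k). ((k, sh (int j) X), j)) ` Trip"
      proof
        fix x assume "x \<in> Sigma PO Fib"
        then obtain p j where x0: "x = (p, j)" "p \<in> PO" "j \<in> Fib p" by blast
        obtain k Q where "p = (k, Q)" by (cases p)
        then have x: "x = ((k, Q), j)" "(k, Q) \<in> PO" "j \<in> Fib (k, Q)" using x0 by simp_all
        have "j < n" "sh (int j) X = Q" using x(3) unfolding Fib_def by auto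
        moreover have "k < n" "rf (int k) Q = Q" using x(2) unfolding PO_def by auto
        ultimately have "(j, k) \<in> Trip" unfolding Trip_def K_def by (simp del: rf_sh)
        moreover have "x = (\<lambda>(j, k). ((k, sh (int j) X), j)) (j, k)" using x \<open>sh (int j) X = Q\<close> by simp
        ultimately show "x \<in> (\<lambda>(j, k). ((k, sh (int j) X), j)) ` Trip" by (rule rev_image_eqI)
      qed
    qed
  qed
  have "card (Sigma PO Fib) = (\<Sum>p\<in>PO. card (Fib p))"
    by (rule card_SigmaI) (use finPO in \<open>auto simp: Fib_def\<close>)
  also have "\<dots> = card PO * t" using cF by simp
  finally have c1: "card (Sigma PO Fib) = card PO * t" .
  have "card Trip = card (Sigma PO Fib)" by (rule bij_betw_same_card[OF bij])
  then have "card PO * t = n * t" using cT c1 by linarith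
  then have "card PO = n" using t1 by simp
  then show ?thesis unfolding PO_def .
qed

definition MF :: "int \<Rightarrow> int set set" where
  "MF N = {P \<in> MM N. \<exists>k. 0 \<le> k \<and> k < N \<and> rf k P = P}"

lemma double_count:
  fixes n :: nat
  assumes n: "n \<ge> 1"
  shows "card (orbE (int n) ` MF (int n)) * n = (\<Sum>k<n. card (FF (int n) (int k)))"
proof -
  define N where "N = int n"
  have N0: "N > 0" using n unfolding N_def by simp
  have finM: "finite (MM N)" using MM_finite[OF N0] .
  define Orbs where "Orbs = orbE N ` MF N"
  have finO: "finite Orbs" unfolding Orbs_def MF_def using finM by simp
  define Pairs where "Pairs = Sigma {..<n} (\<lambda>k. FF N (int k))"
  have cP: "card Pairs = (\<Sum>k<n. card (FF N (int k)))" unfolding Pairs_def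
    by (rule card_SigmaI) (use finM in \<open>auto simp: FF_def\<close>)
  define POf where "POf Ob = {(k, Q). k < n \<and> Q \<in> Ob \<and> rf (int k) Q = Q}" for Ob
  have cPO: "card (POf Ob) = n" if Ob: "Ob \<in> Orbs" for Ob
  proof -
    obtain X k where X: "X \<in> MM N" "rf k X = X" and Ob': "Ob = orbE N X" using Ob unfolding Orbs_def MF_def by blast
    show ?thesis unfolding POf_def Ob' N_def by (rule PO_card[OF n]) (use X in \<open>auto simp: N_def\<close>)
  qed
  have finPO: "finite (POf Ob)" if "Ob \<in> Orbs" for Ob
    using cPO[OF that] n card_ge_0_finite by force
  have bij: "bij_betw (\<lambda>p. (orbE N (snd p), p)) Pairs (Sigma Orbs POf)"
  proof (rule bij_betw_imageI)
    show "inj_on (\<lambda>p. (orbE N (snd p), p)) Pairs" by (rule inj_onI) simp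
    show "(\<lambda>p. (orbE N (snd p), p)) ` Pairs = Sigma Orbs POf"
    proof
      show "(\<lambda>p. (orbE N (snd p), p)) ` Pairs \<subseteq> Sigma Orbs POf"
      proof
        fix x assume "x \<in> (\<lambda>p. (orbE N (snd p), p)) ` Pairs"
        then obtain p where p: "p \<in> Pairs" "x = (orbE N (snd p), p)" by blast
        obtain k Q where kQ: "p = (k, Q)" by (cases p)
        have k: "k < n" and Q: "Q \<in> MM N" "rf (int k) Q = Q" using p(1) unfolding kQ Pairs_def FF_def by auto
        have "Q \<in> MF N" unfolding MF_def using k Q unfolding N_def by (intro CollectI conjI exI[of _ "int k"]) auto
        then have "orbE N Q \<in> Orbs" unfolding Orbs_def by blast
        moreover have "(k, Q) \<in> POf (orbE N Q)" unfolding POf_def using k Q orbE_self[OF N0] by simp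
        ultimately show "x \<in> Sigma Orbs POf" unfolding p(2) kQ by simp
      qed
      show "Sigma Orbs POf \<subseteq> (\<lambda>p. (orbE N (snd p), p)) ` Pairs"
      proof
        fix x assume "x \<in> Sigma Orbs POf"
        then obtain Ob p where x: "x = (Ob, p)" "Ob \<in> Orbs" "p \<in> POf Ob" by blast
        obtain k Q where kQ: "p = (k, Q)" by (cases p)
        have k: "k < n" "Q \<in> Ob" "rf (int k) Q = Q" using x(3) unfolding kQ POf_def by auto
        obtain X where X: "X \<in> MF N" "Ob = orbE N X" using x(2) unfolding Orbs_def by blast
        have XM: "X \<in> MM N" using X unfolding MF_def by blast
        have perX: "per N X" using XM unfolding MM_def by blast
        have QM: "Q \<in> MM N" using orbE_MM[OF _ XM] k(2) X(2) by blast
        have "orbE N Q = Ob" using orbE_eq[OF _ perX N0] k(2) X(2) by blast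
        moreover have "p \<in> Pairs" unfolding kQ Pairs_def FF_def using k QM by simp
        ultimately show "x \<in> (\<lambda>p. (orbE N (snd p), p)) ` Pairs" unfolding x(1) kQ by force
      qed
    qed
  qed
  have "card (Sigma Orbs POf) = (\<Sum>Ob\<in>Orbs. card (POf Ob))"
    by (rule card_SigmaI) (use finO finPO in auto)
  also have "\<dots> = card Orbs * n" using cPO by simp
  finally show ?thesis using bij_betw_same_card[OF bij] cP unfolding Orbs_def N_def by simp
qed

lemma FF_shift2: "card (FF N (k + 2)) = card (FF N k)"
proof -
  have "FF N (k + 2) = sh 1 ` FF N k"
  proof
    show "sh 1 ` FF N k \<subseteq> FF N (k + 2)"
    proof
      fix Q assume "Q \<in> sh 1 ` FF N k"
      then obtain P where P: "P \<in> FF N k" "Q = sh 1 P" by blast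
      have M: "P \<in> MM N" and r: "rf k P = P" using P(1) unfolding FF_def by blast+
      have "sh 1 P = sh 1 (rf k P)" by (simp only: r)
      then have a: "sh 1 P = rf (1 + k) P" by simp
      have e: "k + 2 - 1 = 1 + k" by simp
      have b: "rf (k + 2) (sh 1 P) = rf (1 + k) P" by (simp only: rf_sh e)
      show "Q \<in> FF N (k + 2)" unfolding FF_def P(2) using MM_rf[OF M] a b by simp
    qed
    show "FF N (k + 2) \<subseteq> sh 1 ` FF N k"
    proof
      fix Q assume Q: "Q \<in> FF N (k + 2)"
      have M: "Q \<in> MM N" and r: "rf (k + 2) Q = Q" using Q unfolding FF_def by blast+
      define P where "P = sh (-1) Q"
      have "P \<in> MM N" unfolding P_def using MM_sh[OF M] .
      moreover have "rf k P = P"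
      proof -
        have "sh (-1) Q = sh (-1) (rf (k + 2) Q)" by (simp only: r)
        then have "P = rf (k + 1) Q" unfolding P_def by (simp add: algebra_simps)
        moreover have "rf k P = rf (k + 1) Q" unfolding P_def by simp
        ultimately show ?thesis by simp
      qed
      moreover have "Q = sh 1 P" unfolding P_def by simp
      ultimately show "Q \<in> sh 1 ` FF N k" unfolding FF_def by blast
    qed
  qed
  moreover have "inj_on (sh 1) (FF N k)" by (rule inj_onI) (simp add: sh_inj)
  ultimately show ?thesis by (simp add: card_image)
qed

lemma FF_N: "FF N (k + N) = FF N k"
proof -
  have "rf (k + N) P = rf k P" if "P \<in> MM N" for P
  proof -
    have "per N P" using that unfolding MM_def by blast
    then show ?thesis using rf_per[of N P k 1] by simp
  qed
  then show ?thesis unfolding FF_def by auto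
qed

lemma FF_even_idx: "card (FF N (2 * int m + r)) = card (FF N r)"
proof (induction m)
  case 0 then show ?case by simp
next
  case (Suc m)
  have eq: "2 * int (Suc m) + r = (2 * int m + r) + 2" by simp
  show ?case unfolding eq FF_shift2 by (rule Suc)
qed

lemma sum_odd: fixes n :: nat assumes "odd n" shows "(\<Sum>k<n. card (FF (int n) (int k))) = n * card (FF (int n) 0)"
proof -
  have "card (FF (int n) (int k)) = card (FF (int n) 0)" if "k < n" for k
  proof (cases "even k")
    case True
    then obtain m where "k = 2 * m" by (elim evenE)
    then show ?thesis using FF_even_idx[of "int n" m 0] by simp
  next
    case False
    then have "even (k + n)" using assms by simp
    then obtain m where m: "k + n = 2 * m" by (elim evenE)
    have "FF (int n) (int k) = FF (int n) (int k + int n)" using FF_N[of "int n" "int k"] by simp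
    also have "int k + int n = 2 * int m + 0" using m by linarith
    finally show ?thesis using FF_even_idx[of "int n" m 0] by simp
  qed
  then show ?thesis by simp
qed

lemma sum_even: "(\<Sum>k<2 * h. card (FF N (int k))) = h * (card (FF N 0) + card (FF N 1))"
proof (induction h)
  case 0 then show ?case by simp
next
  case (Suc h)
  have "(\<Sum>k<2 * Suc h. card (FF N (int k))) = (\<Sum>k<2 * h. card (FF N (int k))) + card (FF N (int (2 * h))) + card (FF N (int (2 * h + 1)))"
    by (simp add: sum.lessThan_Suc)
  moreover have "card (FF N (int (2 * h))) = card (FF N 0)" using FF_even_idx[of N h 0] by simp
  moreover have "card (FF N (int (2 * h + 1))) = card (FF N 1)"
  proof -
    have "int (2 * h + 1) = 2 * int h + 1" by simp
    then show ?thesis using FF_even_idx[of N h 1] by (simp only:)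
  qed
  ultimately show ?case using Suc by (simp add: algebra_simps)
qed

lemma pd_pad: "m \<ge> 1 \<Longrightarrow> pd m = padovan m"
proof (induction m rule: less_induct)
  case (less m)
  consider "m = 1" | "m = 2" | "m = 3" | "m \<ge> 4" using less.prems by linarith
  then show ?case
  proof cases
    case 1 then show ?thesis by simp
  next
    case 2 then show ?thesis by (simp add: numeral_2_eq_2)
  next
    case 3 then show ?thesis by (simp add: numeral_3_eq_3)
  next
    case 4
    define j where "j = m - 4"
    have j: "m = Suc (Suc (Suc (Suc j)))" using 4 unfolding j_def by arith
    have "pd m = pd (Suc (Suc j)) + pd (Suc j)" unfolding j by simp
    also have "\<dots> = padovan (Suc (Suc j)) + padovan (Suc j)" using less.IH j by simp
    also have "\<dots> = padovan m" unfolding j by simp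
    finally show ?thesis .
  qed
qed

lemma pad_rec: "m \<ge> 4 \<Longrightarrow> padovan m = padovan (m - 2) + padovan (m - 3)"
proof -
  assume "m \<ge> 4"
  define j where "j = m - 4"
  have j: "m = Suc (Suc (Suc (Suc j)))" using \<open>m \<ge> 4\<close> unfolding j_def by arith
  then show ?thesis by simp
qed

lemma cL: "card (L u v) = (if v < u then 0 else pd (nat (v - u)))" by (rule card_L)

theorem int_main: fixes n :: nat assumes n: "n \<ge> 2"
  shows "card (orbE (int n) ` MF (int n)) = r_seq n"
proof -
  define C where "C = card (orbE (int n) ` MF (int n))"
  have dc: "C * n = (\<Sum>k<n. card (FF (int n) (int k)))" unfolding C_def using double_count n by simp
  show ?thesis
  proof (cases "odd n")
    case True
    then obtain h where h: "n = 2 * h + 1" by (elim oddE)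
    have h1: "h \<ge> 1" using n h by simp
    have "C * n = n * card (FF (int n) 0)" using dc sum_odd[OF True] by simp
    then have C: "C = card (FF (int n) 0)" using n by simp
    have "card (FF (int n) 0) = card (L 0 (int h - 1)) + card (L 1 (int h - 1))"
      by (rule card_FF0_odd) (use h h1 in auto)
    then have C2: "C = card (L 0 (int h - 1)) + card (L 1 (int h - 1))" using C by simp
    have r: "r_seq n = padovan (h + 1)" unfolding r_seq_def using h by simp
    consider "h = 1" | "h = 2" | "h \<ge> 3" using h1 by linarith
    then show ?thesis
    proof cases
      case 1 then show ?thesis using C2 r unfolding C_def by (simp add: cL numeral_2_eq_2)
    next
      case 2 then show ?thesis using C2 r unfolding C_def by (simp add: cL numeral_3_eq_3)
    next
      case 3
      have a: "card (L 0 (int h - 1)) = padovan (h - 1)" using 3 pd_pad[of "h - 1"] by (simp add: cL nat_diff_distrib)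
      have b: "card (L 1 (int h - 1)) = padovan (h - 2)" using 3 pd_pad[of "h - 2"] by (simp add: cL nat_diff_distrib)
      have "padovan (h + 1) = padovan (h - 1) + padovan (h - 2)" using pad_rec[of "h + 1"] 3 by simp
      then show ?thesis using C2 r a b unfolding C_def by simp
    qed
  next
    case False
    then have "even n" by simp
    then obtain h where h: "n = 2 * h" by (elim evenE)
    have h1: "h \<ge> 1" using n h by simp
    have "C * (2 * h) = h * (card (FF (int n) 0) + card (FF (int n) 1))" using dc sum_even[where h=h and N="int n"] h by simp
    then have "h * (2 * C) = h * (card (FF (int n) 0) + card (FF (int n) 1))" by (simp add: algebra_simps)
    then have C: "2 * C = card (FF (int n) 0) + card (FF (int n) 1)" using h1 by simp
    have F0: "card (FF (int n) 0) = card (L 0 (int h)) + card (L 0 (int h - 1)) + card (L 1 (int h)) + card (L 1 (int h - 1))"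
      by (rule card_FF0_even) (use h h1 in auto)
    have F1: "card (FF (int n) 1) = card (L 2 (int h - 1))"
      by (rule card_FF1_even) (use h h1 in auto)
    have r: "r_seq n = padovan (h + 2)" unfolding r_seq_def using h by simp
    consider "h = 1" | "h = 2" | "h = 3" | "h \<ge> 4" using h1 by linarith
    then show ?thesis
    proof cases
      case 1 then show ?thesis using C F0 F1 r unfolding C_def by (simp add: cL numeral_2_eq_2 numeral_3_eq_3)
    next
      case 2 then show ?thesis using C F0 F1 r unfolding C_def by (simp add: cL numeral_2_eq_2 numeral_3_eq_3 eval_nat_numeral)
    next
      case 3 then show ?thesis using C F0 F1 r unfolding C_def by (simp add: cL numeral_2_eq_2 numeral_3_eq_3 eval_nat_numeral)
    next
      case 4
      have a: "card (L 0 (int h)) = padovan h" using 4 pd_pad[of "h"] by (simp add: cL)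
      have b: "card (L 0 (int h - 1)) = padovan (h - 1)" using 4 pd_pad[of "h - 1"] by (simp add: cL nat_diff_distrib)
      have c: "card (L 1 (int h)) = padovan (h - 1)" using 4 pd_pad[of "h - 1"] by (simp add: cL nat_diff_distrib)
      have d: "card (L 1 (int h - 1)) = padovan (h - 2)" using 4 pd_pad[of "h - 2"] by (simp add: cL nat_diff_distrib)
      have e: "card (L 2 (int h - 1)) = padovan (h - 3)" using 4 pd_pad[of "h - 3"] by (simp add: cL nat_diff_distrib)
      have p1: "padovan (h + 2) = padovan h + padovan (h - 1)" using pad_rec[of "h + 2"] 4 by simp
      have p2: "padovan h = padovan (h - 2) + padovan (h - 3)" using pad_rec[of "h"] 4 by simp
      show ?thesis using C F0 F1 r a b c d e p1 p2 unfolding C_def by simp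
    qed
  qed
qed

definition EE :: "nat \<Rightarrow> nat set \<Rightarrow> int set" where "EE n X = {z. nat (z mod int n) \<in> X}"

lemma nat_mod_add: fixes n c :: nat assumes "n \<ge> 1"
  shows "nat ((z + int c) mod int n) = (nat (z mod int n) + c) mod n"
proof -
  have "int ((nat (z mod int n) + c) mod n) = (int (nat (z mod int n)) + int c) mod int n"
    by (simp add: of_nat_mod)
  also have "\<dots> = (z mod int n + int c) mod int n" using assms by simp
  also have "\<dots> = (z + int c) mod int n" by (simp add: mod_simps)
  finally show ?thesis by (metis nat_int)
qed

lemma nat_mod_small: "i < n \<Longrightarrow> nat (int i mod int n) = i"
  by (simp add: zmod_int[symmetric])

lemma EE_mem_nat: "i < n \<Longrightarrow> int i \<in> EE n X \<longleftrightarrow> i \<in> X"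
  unfolding EE_def by (simp add: nat_mod_small)

lemma EE_inj: "inj_on (EE n) (Pow {0..<n})"
proof (rule inj_onI)
  fix X Y assume X: "X \<in> Pow {0..<n}" and Y: "Y \<in> Pow {0..<n}" and e: "EE n X = EE n Y"
  have "i \<in> X \<longleftrightarrow> i \<in> Y" for i
  proof (cases "i < n")
    case True then show ?thesis using EE_mem_nat[of i n X] EE_mem_nat[of i n Y] e by simp
  next
    case False then show ?thesis using X Y by auto
  qed
  then show "X = Y" by blast
qed

lemma EE_per: assumes "n \<ge> 1" shows "per (int n) (EE n X)"
  unfolding per_def EE_def by simp

lemma EE_surj: assumes n: "n \<ge> 1" and P: "per (int n) P" shows "P = EE n {i. i < n \<and> int i \<in> P}"
proof -
  have H: "z \<in> P \<longleftrightarrow> nat (z mod int n) < n \<and> int (nat (z mod int n)) \<in> P" for z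
    using per_mod[OF P, of z] n by (simp add: nat_less_iff)
  show ?thesis
  proof (rule set_eqI)
    fix z show "z \<in> P \<longleftrightarrow> z \<in> EE n {i. i < n \<and> int i \<in> P}"
      unfolding EE_def mem_Collect_eq using H[of z] by blast
  qed
qed

lemma Xfam_EE: assumes n: "n \<ge> 1" and X: "X \<subseteq> {0..<n}"
  shows "X \<in> Xfam n \<longleftrightarrow> EE n X \<in> MM (int n)"
proof -
  have m: "z + int c \<in> EE n X \<longleftrightarrow> (nat (z mod int n) + c) mod n \<in> X" for z c
    unfolding EE_def using nat_mod_add[OF n] by simp
  have m0: "z \<in> EE n X \<longleftrightarrow> nat (z mod int n) \<in> X" for z unfolding EE_def by simp
  have lt: "nat (z mod int n) < n" for z using n by (simp add: nat_less_iff)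
  have A: "(\<forall>i<n. \<not> (i \<in> X \<and> (i + 1) mod n \<in> X)) \<longleftrightarrow> (\<forall>z. \<not> (z \<in> EE n X \<and> z + 1 \<in> EE n X))"
  proof
    assume H: "\<forall>i<n. \<not> (i \<in> X \<and> (i + 1) mod n \<in> X)"
    show "\<forall>z. \<not> (z \<in> EE n X \<and> z + 1 \<in> EE n X)"
      using H lt m[of _ 1] m0 by simp
  next
    assume H: "\<forall>z. \<not> (z \<in> EE n X \<and> z + 1 \<in> EE n X)"
    show "\<forall>i<n. \<not> (i \<in> X \<and> (i + 1) mod n \<in> X)"
    proof (intro allI impI)
      fix i assume i: "i < n"
      show "\<not> (i \<in> X \<and> (i + 1) mod n \<in> X)" using H[rule_format, of "int i"] m[of "int i" 1] m0[of "int i"] nat_mod_small[OF i] by simp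
    qed
  qed
  have B: "(\<forall>i<n. i \<in> X \<or> (i + 1) mod n \<in> X \<or> (i + 2) mod n \<in> X) \<longleftrightarrow> (\<forall>z. z \<in> EE n X \<or> z + 1 \<in> EE n X \<or> z + 2 \<in> EE n X)"
  proof
    assume H: "\<forall>i<n. i \<in> X \<or> (i + 1) mod n \<in> X \<or> (i + 2) mod n \<in> X"
    show "\<forall>z. z \<in> EE n X \<or> z + 1 \<in> EE n X \<or> z + 2 \<in> EE n X"
      using H lt m[of _ 1] m[of _ 2] m0 by simp
  next
    assume H: "\<forall>z. z \<in> EE n X \<or> z + 1 \<in> EE n X \<or> z + 2 \<in> EE n X"
    show "\<forall>i<n. i \<in> X \<or> (i + 1) mod n \<in> X \<or> (i + 2) mod n \<in> X"
    proof (intro allI impI)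
      fix i assume i: "i < n"
      show "i \<in> X \<or> (i + 1) mod n \<in> X \<or> (i + 2) mod n \<in> X"
        using H[rule_format, of "int i"] m[of "int i" 1] m[of "int i" 2] m0[of "int i"] nat_mod_small[OF i] by simp
    qed
  qed
  show ?thesis unfolding Xfam_def MM_def using A B X EE_per[OF n, of X] by auto
qed

lemma dact_lt: "n \<ge> 1 \<Longrightarrow> dact n g i < n"
  unfolding dact_def by (cases g) auto

lemma dact_set_sub: "n \<ge> 1 \<Longrightarrow> dact_set n g X \<subseteq> {0..<n}"
  unfolding dact_set_def using dact_lt[of n g] by auto

lemma EE_rot: assumes n: "n \<ge> 1" and X: "X \<subseteq> {0..<n}"
  shows "EE n (dact_set n (k, False) X) = sh (int k) (EE n X)"
proof (rule set_eqI)
  fix z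
  define N where "N = int n"
  have N0: "N > 0" using n unfolding N_def by simp
  have key: "z mod N = int ((i + k) mod n) \<longleftrightarrow> (z - int k) mod N = int i" if i: "i < n" for i
  proof -
    have a: "int ((i + k) mod n) = (int i + int k) mod N" unfolding N_def by (simp add: of_nat_mod)
    have b: "int i = int i mod N" using i unfolding N_def by simp
    have "z mod N = (int i + int k) mod N \<longleftrightarrow> N dvd z - (int i + int k)" by (rule mod_eq_dvd_iff)
    also have "\<dots> \<longleftrightarrow> N dvd (z - int k) - int i" by (simp add: algebra_simps)
    also have "\<dots> \<longleftrightarrow> (z - int k) mod N = int i mod N" by (rule mod_eq_dvd_iff[symmetric])
    finally show ?thesis using a b by simp
  qed
  have zm: "z \<in> EE n Y \<longleftrightarrow> (\<exists>i\<in>Y. z mod N = int i)" for z Y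
  proof -
    have nn: "z mod N \<ge> 0" using N0 by simp
    have "nat (z mod N) = i \<longleftrightarrow> z mod N = int i" for i using nn by auto
    then show ?thesis unfolding EE_def N_def by auto
  qed
  have zm2: "nat (z mod N) = j \<longleftrightarrow> z mod N = int j" for j
  proof -
    have nn: "z mod N \<ge> 0" using N0 by simp
    then show ?thesis by auto
  qed
  have "z \<in> EE n (dact_set n (k, False) X) \<longleftrightarrow> (\<exists>i\<in>X. nat (z mod N) = (i + k) mod n)"
    unfolding EE_def dact_set_def dact_def N_def by auto
  also have "\<dots> \<longleftrightarrow> (\<exists>i\<in>X. z mod N = int ((i + k) mod n))" using zm2 by simp
  also have "\<dots> \<longleftrightarrow> (\<exists>i\<in>X. (z - int k) mod N = int i)"
  proof
    assume "\<exists>i\<in>X. z mod N = int ((i + k) mod n)"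
    then obtain i where i: "i \<in> X" "z mod N = int ((i + k) mod n)" by blast
    have "i < n" using i X by auto
    then show "\<exists>i\<in>X. (z - int k) mod N = int i" using key[of i] i by blast
  next
    assume "\<exists>i\<in>X. (z - int k) mod N = int i"
    then obtain i where i: "i \<in> X" "(z - int k) mod N = int i" by blast
    have "i < n" using i X by auto
    then show "\<exists>i\<in>X. z mod N = int ((i + k) mod n)" using key[of i] i by blast
  qed
  also have "\<dots> \<longleftrightarrow> z - int k \<in> EE n X" using zm by simp
  finally show "z \<in> EE n (dact_set n (k, False) X) \<longleftrightarrow> z \<in> sh (int k) (EE n X)" by simp
qed

lemma EE_ref: assumes n: "n \<ge> 1" and X: "X \<subseteq> {0..<n}"
  shows "EE n (dact_set n (k, True) X) = rf (int k) (EE n X)"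
proof (rule set_eqI)
  fix z
  define N where "N = int n"
  have N0: "N > 0" using n unfolding N_def by simp
  have key: "z mod N = int ((k + (n - i mod n)) mod n) \<longleftrightarrow> (int k - z) mod N = int i" if i: "i < n" for i
  proof -
    have a: "int ((k + (n - i mod n)) mod n) = (int k + N - int i) mod N" using i unfolding N_def
      by (simp add: of_nat_mod of_nat_diff)
    have b: "int i = int i mod N" using i unfolding N_def by simp
    have "z mod N = (int k + N - int i) mod N \<longleftrightarrow> N dvd z - (int k + N - int i)" by (rule mod_eq_dvd_iff)
    also have "\<dots> \<longleftrightarrow> N dvd (int k - z) - int i"
    proof -
      have e: "z - (int k + N - int i) = - (((int k - z) - int i) + N)" by simp
      have "N dvd z - (int k + N - int i) \<longleftrightarrow> N dvd ((int k - z) - int i) + N" unfolding e by (rule dvd_minus_iff)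
      also have "\<dots> \<longleftrightarrow> N dvd (int k - z) - int i" by (rule dvd_add_triv_right_iff)
      finally show ?thesis .
    qed
    also have "\<dots> \<longleftrightarrow> (int k - z) mod N = int i mod N" by (rule mod_eq_dvd_iff[symmetric])
    finally show ?thesis using a b by simp
  qed
  have zm: "z \<in> EE n Y \<longleftrightarrow> (\<exists>i\<in>Y. z mod N = int i)" for z Y
  proof -
    have nn: "z mod N \<ge> 0" using N0 by simp
    have "nat (z mod N) = i \<longleftrightarrow> z mod N = int i" for i using nn by auto
    then show ?thesis unfolding EE_def N_def by auto
  qed
  have zm2: "nat (z mod N) = j \<longleftrightarrow> z mod N = int j" for j
  proof -
    have nn: "z mod N \<ge> 0" using N0 by simp
    then show ?thesis by auto
  qed
  have "z \<in> EE n (dact_set n (k, True) X) \<longleftrightarrow> (\<exists>i\<in>X. nat (z mod N) = (k + (n - i mod n)) mod n)"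
    unfolding EE_def dact_set_def dact_def N_def by auto
  also have "\<dots> \<longleftrightarrow> (\<exists>i\<in>X. z mod N = int ((k + (n - i mod n)) mod n))" using zm2 by simp
  also have "\<dots> \<longleftrightarrow> (\<exists>i\<in>X. (int k - z) mod N = int i)"
  proof
    assume "\<exists>i\<in>X. z mod N = int ((k + (n - i mod n)) mod n)"
    then obtain i where i: "i \<in> X" "z mod N = int ((k + (n - i mod n)) mod n)" by blast
    have "i < n" using i X by auto
    then show "\<exists>i\<in>X. (int k - z) mod N = int i" using key[of i] i by blast
  next
    assume "\<exists>i\<in>X. (int k - z) mod N = int i"
    then obtain i where i: "i \<in> X" "(int k - z) mod N = int i" by blast
    have "i < n" using i X by auto
    then show "\<exists>i\<in>X. z mod N = int ((k + (n - i mod n)) mod n)" using key[of i] i by blast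
  qed
  also have "\<dots> \<longleftrightarrow> int k - z \<in> EE n X" using zm by simp
  finally show "z \<in> EE n (dact_set n (k, True) X) \<longleftrightarrow> z \<in> rf (int k) (EE n X)" by simp
qed

lemma Stab_iff: "\<not> Stab n X \<subseteq> rotations n \<longleftrightarrow> (\<exists>k<n. dact_set n (k, True) X = X)"
  unfolding Stab_def rotations_def dihedral_def by auto

lemma Xfam_sub: "X \<in> Xfam n \<Longrightarrow> X \<subseteq> {0..<n}" unfolding Xfam_def by blast

lemma orbit_EE: assumes n: "n \<ge> 1" and X: "X \<subseteq> {0..<n}"
  shows "EE n ` orbit n X = orbE (int n) (EE n X)"
proof
  show "EE n ` orbit n X \<subseteq> orbE (int n) (EE n X)"
  proof
    fix Y assume "Y \<in> EE n ` orbit n X"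
    then obtain k b where kb: "k < n" "Y = EE n (dact_set n (k, b) X)"
      unfolding orbit_def dihedral_def by auto
    show "Y \<in> orbE (int n) (EE n X)"
    proof (cases b)
      case True
      then have "Y = rf (int k) (EE n X)" using kb EE_ref[OF n X] by simp
      then show ?thesis unfolding orbE_def using kb by auto
    next
      case False
      then have "Y = sh (int k) (EE n X)" using kb EE_rot[OF n X] by simp
      then show ?thesis unfolding orbE_def using kb by auto
    qed
  qed
  show "orbE (int n) (EE n X) \<subseteq> EE n ` orbit n X"
  proof
    fix Y assume "Y \<in> orbE (int n) (EE n X)"
    then obtain j b where j: "0 \<le> j" "j < int n" "Y = sh j (EE n X) \<and> \<not> b \<or> Y = rf j (EE n X) \<and> b"
      unfolding orbE_def by auto
    define k where "k = nat j"
    have k: "k < n" "j = int k" using j unfolding k_def by auto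
    have "Y = EE n (dact_set n (k, b) X)" using j k EE_rot[OF n X, of k] EE_ref[OF n X, of k] by auto
    moreover have "dact_set n (k, b) X \<in> orbit n X" unfolding orbit_def dihedral_def using k by auto
    ultimately show "Y \<in> EE n ` orbit n X" by blast
  qed
qed

lemma Xfam_1: "Xfam 1 = {}"
proof -
  have False if "X \<in> Xfam 1" for X
  proof -
    have "EE 1 X \<in> MM (int 1)" using Xfam_EE[of 1 X] Xfam_sub[OF that] that by simp
    then show False using MM_1 by simp
  qed
  then show ?thesis by blast
qed

theorem proposition3p4:
  fixes n :: nat
  assumes "n \<ge> 1"
  shows "card {orbit n X | X. X \<in> Xfam n \<and> \<not> Stab n X \<subseteq> rotations n} = r_seq n"
proof (cases "n = 1")
  case True
  then show ?thesis using Xfam_1 by (simp add: r_seq_def)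
next
  case False
  then have n2: "n \<ge> 2" using assms by simp
  have n: "n \<ge> 1" using assms .
  define A where "A = {X. X \<in> Xfam n \<and> (\<exists>k<n. dact_set n (k, True) X = X)}"
  define S where "S = {orbit n X | X. X \<in> Xfam n \<and> \<not> Stab n X \<subseteq> rotations n}"
  have SA: "S = orbit n ` A" unfolding S_def A_def Stab_iff by blast
  have img: "image (EE n) ` S = orbE (int n) ` (EE n ` A)"
  proof -
    have "image (EE n) ` S = (\<lambda>X. EE n ` orbit n X) ` A" unfolding SA by (simp add: image_image)
    also have "\<dots> = (\<lambda>X. orbE (int n) (EE n X)) ` A"
      by (rule image_cong) (use orbit_EE[OF n] Xfam_sub in \<open>auto simp: A_def\<close>)
    finally show ?thesis by (simp add: image_image)
  qed
  have EA: "EE n ` A = MF (int n)"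
  proof
    show "EE n ` A \<subseteq> MF (int n)"
    proof
      fix P assume "P \<in> EE n ` A"
      then obtain X k where X: "X \<in> Xfam n" "k < n" "dact_set n (k, True) X = X" "P = EE n X"
        unfolding A_def by blast
      have sub: "X \<subseteq> {0..<n}" using Xfam_sub[OF X(1)] .
      have "P \<in> MM (int n)" using Xfam_EE[OF n sub] X by simp
      moreover have "rf (int k) P = P" using EE_ref[OF n sub, of k] X by simp
      ultimately show "P \<in> MF (int n)" unfolding MF_def using X(2) by (intro CollectI conjI exI[of _ "int k"]) auto
    qed
    show "MF (int n) \<subseteq> EE n ` A"
    proof
      fix P assume P: "P \<in> MF (int n)"
      obtain j where j: "P \<in> MM (int n)" "0 \<le> j" "j < int n" "rf j P = P" using P unfolding MF_def by blast
      define X where "X = {i. i < n \<and> int i \<in> P}"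
      have per: "per (int n) P" using j(1) unfolding MM_def by blast
      have PX: "P = EE n X" unfolding X_def by (rule EE_surj[OF n per])
      have sub: "X \<subseteq> {0..<n}" unfolding X_def by auto
      have XF: "X \<in> Xfam n" using Xfam_EE[OF n sub] j(1) PX by simp
      define k where "k = nat j"
      have k: "k < n" "j = int k" using j unfolding k_def by auto
      have "EE n (dact_set n (k, True) X) = EE n X" using EE_ref[OF n sub, of k] j(4) PX k by simp
      then have "dact_set n (k, True) X = X"
        by (rule inj_onD[OF EE_inj]) (use dact_set_sub[OF n] sub in auto)
      then have "X \<in> A" unfolding A_def using XF k by blast
      then show "P \<in> EE n ` A" using PX by blast
    qed
  qed
  have inj: "inj_on (image (EE n)) S"
  proof (rule inj_on_image)
    have "\<Union> S \<subseteq> Pow {0..<n}"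
    proof
      fix Y assume "Y \<in> \<Union> S"
      then obtain X where "Y \<in> orbit n X" unfolding SA by blast
      then obtain g where "Y = dact_set n g X" unfolding orbit_def by blast
      then show "Y \<in> Pow {0..<n}" using dact_set_sub[OF n] by simp
    qed
    then show "inj_on (EE n) (\<Union> S)" by (rule inj_on_subset[OF EE_inj])
  qed
  have "card S = card (image (EE n) ` S)" using card_image[OF inj] by simp
  also have "\<dots> = card (orbE (int n) ` MF (int n))" unfolding img EA ..
  also have "\<dots> = r_seq n" by (rule int_main[OF n2])
  finally show ?thesis unfolding S_def .
qed


end
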